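(* Let the control policy be $u_k^*=-K_k\hat x_k$. For a choice of age $\eta_k$ at time $k$ write $e_k(\eta_k)=\sum_{t=1}^{\eta_k}A^{t-1}w_{k-t}$. Define value functions backward by $V^q_{N+1}=0$ and $$V^q_k=\min_{\eta_k\in\{0,\dots,\eta_{k-1}+1\}}\Big\{-\theta_k\eta_k+e_k(\eta_k)^T\Gamma_ke_k(\eta_k)+\mathbb{E}[V^q_{k+1}\mid\mathcal{I}^q_k]\Big\},$$ where $V^q_{k+1}$ depends on $\eta_k$ through the constraint $\eta_{k+1}\le\eta_k+1$. Then the optimal admissible queuing policy (minimizing $\chi$ given $u^*$) is $$\eta_k^*=\operatorname*{arg\,min}_{\eta_k\in\{0,\dots,\eta_{k-1}+1\}}\Big\{-\theta_k\eta_k+c_k+\Big(\sum_{t=1}^{\eta_k}A^{t-1}w_{k-t}\Big)^T\Gamma_k\Big(\sum_{t=1}^{\eta_k}A^{t-1}w_{k-t}\Big)\Big\},$$ where $c_k=\mathbb{E}[V^q_{k+1}\mid\mathcal{I}^q_k]$ (a quantity depending on $\eta_k$) and $\Gamma_k=K_k^T(B^TS_{k+1}B+R_k)K_k$.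
   Context: Let $A\in\mathbb{R}^{n\times n}$, $B\in\mathbb{R}^{n\times m}$ with $(A,B)$ controllable. The plant evolves as $x_{k+1}=Ax_k+Bu_k+w_k$, $k=0,\dots,N$, where $x_0$ is Gaussian with mean $m_0$ and covariance $M_0$, the $w_k\in\mathbb{R}^n$ are independent zero-mean Gaussian vectors with covariance $W_k\succ0$, independent of $x_0$. The age of information is an integer sequence $\eta_0=0$, $\eta_k\in\{0,1,\dots,\eta_{k-1}+1\}$; at time $k$ the latest measurement at the controller is $x_{k-\eta_k}$. Controller information set: $\mathcal{I}^c_k=\{x_{t-\eta_t}:0\le t\le k\}$ (information that the ages carry about the states is neglected); the controller estimate is $\hat x_k=A^{\eta_k}x_{k-\eta_k}+\sum_{t=1}^{\eta_k}A^{t-1}Bu_{k-t}$. Queuing information set: $\mathcal{I}^q_k=\{w_t: t\le k-1\}$; a queuing policy $\pi=\{\eta_0,\dots,\eta_N\}$ is admissible if $\eta_k$ is $\mathcal{I}^q_k$-measurable for all $k$. Weights: $Q_k\succeq0$ ($k=0,\dots,N+1$), $R_k\succ0$, real $\theta_k$. Cost: $$\chi(\pi,\mu)=\mathbb{E}\Big[x_{N+1}^TQ_{N+1}x_{N+1}+\sum_{k=0}^N\big(-\theta_k\eta_k+x_k^TQ_kx_k+u_k^TR_ku_k\big)\Big].$$ Riccati recursion: $S_{N+1}=Q_{N+1}$, $K_k=(R_k+B^TS_{k+1}B)^{-1}B^TS_{k+1}A$, $S_k=Q_k+A^TS_{k+1}A-K_k^T(R_k+B^TS_{k+1}B)K_k$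 for $k=N,\dots,0$. *)

theory Defs
  imports "HOL-Analysis.Analysis" "HOL-Probability.Probability"
begin

text \<open>Matrix power with respect to matrix multiplication (the ring power on
  real^'n^'n would be componentwise, so we define it explicitly).\<close>
primrec mpow :: "real^'n^'n \<Rightarrow> nat \<Rightarrow> real^'n^'n" where
  "mpow A 0 = mat 1"
| "mpow A (Suc k) = A ** mpow A k"

definition sym_psd :: "real^'n^'n \<Rightarrow> bool" where
  "sym_psd C \<longleftrightarrow> transpose C = C \<and> (\<forall>x. 0 \<le> x \<bullet> (C *v x))"

definition sym_pd :: "real^'n^'n \<Rightarrow> bool" where
  "sym_pd C \<longleftrightarrow> transpose C = C \<and> (\<forall>x. x \<noteq> 0 \<longrightarrow> 0 < x \<bullet> (C *v x))"

primrec lin_state :: "real^'n^'n \<Rightarrow> real^'m^'n \<Rightarrow> real^'n \<Rightarrow> (nat \<Rightarrow> real^'m) \<Rightarrow> nat \<Rightarrow> real^'n" where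
  "lin_state A B x us 0 = x"
| "lin_state A B x us (Suc k) = A *v lin_state A B x us k + B *v us k"

definition controllable :: "real^'n^'n \<Rightarrow> real^'m^'n \<Rightarrow> bool" where
  "controllable A B \<longleftrightarrow> (\<forall>x y. \<exists>us T. lin_state A B x us T = y)"

text \<open>ric_back A B Q R N j = S_{N+1-j}.\<close>
primrec ric_back :: "real^'n^'n \<Rightarrow> real^'m^'n \<Rightarrow> (nat \<Rightarrow> real^'n^'n) \<Rightarrow> (nat \<Rightarrow> real^'m^'m)
    \<Rightarrow> nat \<Rightarrow> nat \<Rightarrow> real^'n^'n" where
  "ric_back A B Q R N 0 = Q (Suc N)"
| "ric_back A B Q R N (Suc j) =
     (let k = N - j; S1 = ric_back A B Q R N j;
          G = R k + transpose B ** S1 ** B;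
          K = matrix_inv G ** transpose B ** S1 ** A
      in Q k + transpose A ** S1 ** A - transpose K ** G ** K)"

definition ricS :: "real^'n^'n \<Rightarrow> real^'m^'n \<Rightarrow> (nat \<Rightarrow> real^'n^'n) \<Rightarrow> (nat \<Rightarrow> real^'m^'m)
    \<Rightarrow> nat \<Rightarrow> nat \<Rightarrow> real^'n^'n" where
  "ricS A B Q R N k = ric_back A B Q R N (Suc N - k)"

definition ricK :: "real^'n^'n \<Rightarrow> real^'m^'n \<Rightarrow> (nat \<Rightarrow> real^'n^'n) \<Rightarrow> (nat \<Rightarrow> real^'m^'m)
    \<Rightarrow> nat \<Rightarrow> nat \<Rightarrow> real^'n^'m" where
  "ricK A B Q R N k = matrix_inv (R k + transpose B ** ricS A B Q R N (Suc k) ** B)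
      ** transpose B ** ricS A B Q R N (Suc k) ** A"

definition ricGamma :: "real^'n^'n \<Rightarrow> real^'m^'n \<Rightarrow> (nat \<Rightarrow> real^'n^'n) \<Rightarrow> (nat \<Rightarrow> real^'m^'m)
    \<Rightarrow> nat \<Rightarrow> nat \<Rightarrow> real^'n^'n" where
  "ricGamma A B Q R N k = transpose (ricK A B Q R N k)
      ** (transpose B ** ricS A B Q R N (Suc k) ** B + R k) ** ricK A B Q R N k"

definition gaussian_vec :: "'a measure \<Rightarrow> ('a \<Rightarrow> real^'n) \<Rightarrow> real^'n \<Rightarrow> real^'n^'n \<Rightarrow> bool" where
  "gaussian_vec M X m C \<longleftrightarrow> X \<in> borel_measurable M \<and>
     (\<forall>a. if a \<bullet> (C *v a) = 0
          then (AE \<omega> in M. a \<bullet> X \<omega> = a \<bullet> m)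
          else distributed M lborel (\<lambda>\<omega>. a \<bullet> X \<omega>)
                 (\<lambda>x. ennreal (normal_density (a \<bullet> m) (sqrt (a \<bullet> (C *v a))) x)))"

text \<open>Given the realisation of the ages eta, the initial state x0 and the noise w,
  and the feedback gains K, hist k returns (x_0..x_k, u_0..u_{k-1}) where
  u_j = - K_j xhat_j,
  xhat_j = A^{eta_j} x_{j-eta_j} + sum_{t=1}^{eta_j} A^{t-1} B u_{j-t},
  x_{j+1} = A x_j + B u_j + w_j.\<close>
primrec hist :: "real^'n^'n \<Rightarrow> real^'m^'n \<Rightarrow> (nat \<Rightarrow> real^'n^'m) \<Rightarrow> (nat \<Rightarrow> nat)
    \<Rightarrow> real^'n \<Rightarrow> (nat \<Rightarrow> real^'n) \<Rightarrow> nat \<Rightarrow> (nat \<Rightarrow> real^'n) \<times> (nat \<Rightarrow> real^'m)" where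
  "hist A B K eta x0 w 0 = ((\<lambda>_. x0), (\<lambda>_. 0))"
| "hist A B K eta x0 w (Suc k) =
     (let xs = fst (hist A B K eta x0 w k); us = snd (hist A B K eta x0 w k);
          xh = mpow A (eta k) *v xs (k - eta k)
               + (\<Sum>t\<in>{1..eta k}. (mpow A (t - 1) ** B) *v us (k - t));
          uk = - (K k *v xh)
      in (xs(Suc k := A *v xs k + B *v uk + w k), us(k := uk)))"

definition cl_x :: "real^'n^'n \<Rightarrow> real^'m^'n \<Rightarrow> (nat \<Rightarrow> real^'n^'m) \<Rightarrow> (nat \<Rightarrow> nat)
    \<Rightarrow> real^'n \<Rightarrow> (nat \<Rightarrow> real^'n) \<Rightarrow> nat \<Rightarrow> real^'n" where
  "cl_x A B K eta x0 w k = fst (hist A B K eta x0 w k) k"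

definition cl_u :: "real^'n^'n \<Rightarrow> real^'m^'n \<Rightarrow> (nat \<Rightarrow> real^'n^'m) \<Rightarrow> (nat \<Rightarrow> nat)
    \<Rightarrow> real^'n \<Rightarrow> (nat \<Rightarrow> real^'n) \<Rightarrow> nat \<Rightarrow> real^'m" where
  "cl_u A B K eta x0 w k = snd (hist A B K eta x0 w (Suc k)) k"

definition cl_cost :: "real^'n^'n \<Rightarrow> real^'m^'n \<Rightarrow> (nat \<Rightarrow> real^'n^'m) \<Rightarrow> (nat \<Rightarrow> real^'n^'n)
    \<Rightarrow> (nat \<Rightarrow> real^'m^'m) \<Rightarrow> (nat \<Rightarrow> real) \<Rightarrow> nat \<Rightarrow> (nat \<Rightarrow> nat)
    \<Rightarrow> real^'n \<Rightarrow> (nat \<Rightarrow> real^'n) \<Rightarrow> real" where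
  "cl_cost A B K Q R \<theta> N eta x0 w =
     (let x = cl_x A B K eta x0 w; u = cl_u A B K eta x0 w in
      x (Suc N) \<bullet> (Q (Suc N) *v x (Suc N))
      + (\<Sum>k\<in>{0..N}. - \<theta> k * real (eta k) + x k \<bullet> (Q k *v x k) + u k \<bullet> (R k *v u k)))"

definition Fq :: "'a measure \<Rightarrow> (nat \<Rightarrow> 'a \<Rightarrow> real^'n) \<Rightarrow> nat \<Rightarrow> 'a measure" where
  "Fq M w k = vimage_algebra (space M) (\<lambda>\<omega>. restrict (\<lambda>t. w t \<omega>) {..<k})
       (Pi\<^sub>M {..<k} (\<lambda>_. borel))"

definition admissible :: "'a measure \<Rightarrow> (nat \<Rightarrow> 'a \<Rightarrow> real^'n) \<Rightarrow> nat \<Rightarrow> (nat \<Rightarrow> 'a \<Rightarrow> nat) \<Rightarrow> bool" where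
  "admissible M w N eta \<longleftrightarrow>
     (\<forall>\<omega>\<in>space M. eta 0 \<omega> = 0) \<and>
     (\<forall>k\<in>{1..N}. \<forall>\<omega>\<in>space M. eta k \<omega> \<le> eta (k - 1) \<omega> + 1) \<and>
     (\<forall>k\<le>N. eta k \<in> measurable (Fq M w k) (count_space UNIV))"

definition chi :: "'a measure \<Rightarrow> real^'n^'n \<Rightarrow> real^'m^'n \<Rightarrow> (nat \<Rightarrow> real^'n^'n)
    \<Rightarrow> (nat \<Rightarrow> real^'m^'m) \<Rightarrow> (nat \<Rightarrow> real) \<Rightarrow> nat \<Rightarrow> ('a \<Rightarrow> real^'n)
    \<Rightarrow> (nat \<Rightarrow> 'a \<Rightarrow> real^'n) \<Rightarrow> (nat \<Rightarrow> 'a \<Rightarrow> nat) \<Rightarrow> real" where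
  "chi M A B Q R \<theta> N x0 w eta =
     (\<integral>\<omega>. cl_cost A B (ricK A B Q R N) Q R \<theta> N (\<lambda>k. eta k \<omega>) (x0 \<omega>) (\<lambda>k. w k \<omega>) \<partial>M)"

definition ek :: "real^'n^'n \<Rightarrow> (nat \<Rightarrow> 'a \<Rightarrow> real^'n) \<Rightarrow> nat \<Rightarrow> nat \<Rightarrow> 'a \<Rightarrow> real^'n" where
  "ek A w k e \<omega> = (\<Sum>t\<in>{1..e}. mpow A (t - 1) *v w (k - t) \<omega>)"

text \<open>Vq_back ... j a = V^q_{N+1-j} as a function of the previous age a = eta_{k-1}.\<close>
primrec Vq_back :: "'a measure \<Rightarrow> real^'n^'n \<Rightarrow> real^'m^'n \<Rightarrow> (nat \<Rightarrow> real^'n^'n)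
    \<Rightarrow> (nat \<Rightarrow> real^'m^'m) \<Rightarrow> (nat \<Rightarrow> real) \<Rightarrow> nat \<Rightarrow> (nat \<Rightarrow> 'a \<Rightarrow> real^'n)
    \<Rightarrow> nat \<Rightarrow> nat \<Rightarrow> 'a \<Rightarrow> real" where
  "Vq_back M A B Q R \<theta> N w 0 a \<omega> = 0"
| "Vq_back M A B Q R \<theta> N w (Suc j) a \<omega> =
     (let k = N - j in
      Min ((\<lambda>e. - \<theta> k * real e + ek A w k e \<omega> \<bullet> (ricGamma A B Q R N k *v ek A w k e \<omega>)
                + real_cond_exp M (Fq M w k) (Vq_back M A B Q R \<theta> N w j e) \<omega>) ` {0..a+1}))"

definition Vq :: "'a measure \<Rightarrow> real^'n^'n \<Rightarrow> real^'m^'n \<Rightarrow> (nat \<Rightarrow> real^'n^'n)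
    \<Rightarrow> (nat \<Rightarrow> real^'m^'m) \<Rightarrow> (nat \<Rightarrow> real) \<Rightarrow> nat \<Rightarrow> (nat \<Rightarrow> 'a \<Rightarrow> real^'n)
    \<Rightarrow> nat \<Rightarrow> nat \<Rightarrow> 'a \<Rightarrow> real" where
  "Vq M A B Q R \<theta> N w k = Vq_back M A B Q R \<theta> N w (Suc N - k)"

definition qobj :: "'a measure \<Rightarrow> real^'n^'n \<Rightarrow> real^'m^'n \<Rightarrow> (nat \<Rightarrow> real^'n^'n)
    \<Rightarrow> (nat \<Rightarrow> real^'m^'m) \<Rightarrow> (nat \<Rightarrow> real) \<Rightarrow> nat \<Rightarrow> (nat \<Rightarrow> 'a \<Rightarrow> real^'n)
    \<Rightarrow> nat \<Rightarrow> nat \<Rightarrow> 'a \<Rightarrow> real" where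
  "qobj M A B Q R \<theta> N w k e \<omega> =
     - \<theta> k * real e + real_cond_exp M (Fq M w k) (Vq M A B Q R \<theta> N w (Suc k) e) \<omega>
     + ek A w k e \<omega> \<bullet> (ricGamma A B Q R N k *v ek A w k e \<omega>)"

definition argmin_policy :: "'a measure \<Rightarrow> real^'n^'n \<Rightarrow> real^'m^'n \<Rightarrow> (nat \<Rightarrow> real^'n^'n)
    \<Rightarrow> (nat \<Rightarrow> real^'m^'m) \<Rightarrow> (nat \<Rightarrow> real) \<Rightarrow> nat \<Rightarrow> (nat \<Rightarrow> 'a \<Rightarrow> real^'n)
    \<Rightarrow> (nat \<Rightarrow> 'a \<Rightarrow> nat) \<Rightarrow> bool" where
  "argmin_policy M A B Q R \<theta> N w eta \<longleftrightarrow>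
     (\<forall>\<omega>\<in>space M. eta 0 \<omega> = 0) \<and>
     (\<forall>k\<in>{1..N}. \<forall>\<omega>\<in>space M. eta k \<omega> \<le> eta (k - 1) \<omega> + 1 \<and>
        (\<forall>e\<le>eta (k - 1) \<omega> + 1.
           qobj M A B Q R \<theta> N w k (eta k \<omega>) \<omega> \<le> qobj M A B Q R \<theta> N w k e \<omega>))"

end

theory Submission
  imports Defs
begin

lemma inner_mv_transpose: "(x::real^'n) \<bullet> (M *v y) = (transpose M *v x) \<bullet> y"
  by (metis dot_lmul_matrix inner_commute transpose_matrix_vector transpose_transpose vector_transpose_matrix)

lemma sym_inner_swap: "transpose (S::real^'n^'n) = S \<Longrightarrow> x \<bullet> (S *v y) = y \<bullet> (S *v x)"
  by (metis inner_commute inner_mv_transpose)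

lemma transpose_plus: "transpose ((A::real^'n^'m) + B) = transpose A + transpose B"
  by (simp add: transpose_def vec_eq_iff)
lemma transpose_minus: "transpose ((A::real^'n^'m) - B) = transpose A - transpose B"
  by (simp add: transpose_def vec_eq_iff)

lemma inner_mm: "(x::real^'n) \<bullet> ((transpose A ** S ** C) *v y) = (A *v x) \<bullet> (S *v (C *v y))"
proof -
  have "(transpose A ** S ** C) *v y = transpose A *v (S *v (C *v y))"
    by (simp only: matrix_vector_mul_assoc matrix_mul_assoc)
  then show ?thesis using inner_mv_transpose[of x "transpose A"] by (simp only: transpose_transpose)
qed

lemma riccati_identity:
  fixes A :: "real^'n^'n" and B :: "real^'m^'n" and S' Q S :: "real^'n^'n" and R G :: "real^'m^'m"
    and K :: "real^'n^'m"
  assumes S'sym: "transpose S' = S'" and Rsym: "transpose R = R"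
    and G: "G = R + transpose B ** S' ** B" and Ginv: "G ** matrix_inv G = mat 1"
    and K: "K = matrix_inv G ** transpose B ** S' ** A"
    and S: "S = Q + transpose A ** S' ** A - transpose K ** G ** K"
  shows "(A *v x + B *v u + w) \<bullet> (S' *v (A *v x + B *v u + w)) + x \<bullet> (Q *v x) + u \<bullet> (R *v u)
       = x \<bullet> (S *v x) + (u + K *v x) \<bullet> (G *v (u + K *v x)) + w \<bullet> (S' *v w)
         + 2 * (w \<bullet> (S' *v (A *v x + B *v u)))"
proof -
  have Gsym: "transpose G = G" using G S'sym Rsym by (simp add: matrix_transpose_mul transpose_plus matrix_mul_assoc)
  have GK: "G ** K = transpose B ** S' ** A"
    by (metis K Ginv matrix_mul_assoc matrix_mul_lid)
  have e1: "(B *v u) \<bullet> (S' *v (A *v x)) = u \<bullet> (G *v (K *v x))"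
    by (simp only: matrix_vector_mul_assoc GK inner_mm)
  have e2: "(A *v x) \<bullet> (S' *v (B *v u)) = u \<bullet> (G *v (K *v x))"
    using e1 sym_inner_swap[OF S'sym] by metis
  have e3: "(K *v x) \<bullet> (G *v u) = u \<bullet> (G *v (K *v x))"
    using sym_inner_swap[OF Gsym] by metis
  have e4: "u \<bullet> (G *v u) = u \<bullet> (R *v u) + (B *v u) \<bullet> (S' *v (B *v u))"
    by (simp only: G matrix_vector_mult_add_rdistrib inner_add_right inner_mm)
  have e5: "x \<bullet> (S *v x) = x \<bullet> (Q *v x) + (A *v x) \<bullet> (S' *v (A *v x)) - (K *v x) \<bullet> (G *v (K *v x))"
    by (simp only: S matrix_vector_mult_add_rdistrib matrix_vector_mult_diff_rdistrib inner_add_right inner_diff_right inner_mm)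
  have e6: "w \<bullet> (S' *v (A *v x)) = (A *v x) \<bullet> (S' *v w)" "w \<bullet> (S' *v (B *v u)) = (B *v u) \<bullet> (S' *v w)"
    using sym_inner_swap[OF S'sym] by metis+
  have e7: "(B *v u) \<bullet> (S' *v (A *v x)) = (A *v x) \<bullet> (S' *v (B *v u))" using e1 e2 by simp
  show ?thesis
    by (simp add: inner_add_left inner_add_right e1 e2 e3 e4 e5 e6 algebra_simps)
qed


lemma invertible_matrix_inv:
  assumes "invertible (G::real^'n^'n)"
  shows "G ** matrix_inv G = mat 1" "matrix_inv G ** G = mat 1"
  using someI_ex[OF assms[unfolded invertible_def]] unfolding matrix_inv_def by auto

lemma pd_invertible:
  assumes "\<And>x. x \<noteq> 0 \<Longrightarrow> 0 < x \<bullet> ((G::real^'n^'n) *v x)"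
  shows "invertible G"
proof -
  have "\<forall>x. G *v x = 0 \<longrightarrow> x = 0" using assms by (metis inner_zero_right less_irrefl)
  then show ?thesis using matrix_left_invertible_ker invertible_left_inverse by blast
qed

lemma ric_back_psd:
  fixes A :: "real^'n^'n" and B :: "real^'m^'n"
  assumes Q: "\<And>k. k \<le> Suc N \<Longrightarrow> sym_psd (Q k)" and R: "\<And>k. k \<le> N \<Longrightarrow> sym_pd (R k)"
  shows "j \<le> Suc N \<Longrightarrow> sym_psd (ric_back A B Q R N j)"
proof (induction j)
  case 0
  then show ?case using Q by simp
next
  case (Suc j)
  define k where "k = N - j"
  have kN: "k \<le> N" using k_def by simp
  define S1 where "S1 = ric_back A B Q R N j"
  have S1: "sym_psd S1" using Suc S1_def by simp
  define G where "G = R k + transpose B ** S1 ** B"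
  define K where "K = matrix_inv G ** transpose B ** S1 ** A"
  define S where "S = Q k + transpose A ** S1 ** A - transpose K ** G ** K"
  have SS: "ric_back A B Q R N (Suc j) = S"
    by (simp add: S_def K_def G_def S1_def k_def Let_def)
  have Rk: "sym_pd (R k)" using R kN by simp
  have Qk: "sym_psd (Q k)" using Q kN by simp
  have Gpd: "0 < x \<bullet> (G *v x)" if "x \<noteq> 0" for x
  proof -
    have "x \<bullet> (G *v x) = x \<bullet> (R k *v x) + (B *v x) \<bullet> (S1 *v (B *v x))"
      by (simp only: G_def matrix_vector_mult_add_rdistrib inner_add_right inner_mm)
    moreover have "0 < x \<bullet> (R k *v x)" using Rk that unfolding sym_pd_def by blast
    moreover have "0 \<le> (B *v x) \<bullet> (S1 *v (B *v x))" using S1 unfolding sym_psd_def by blast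
    ultimately show ?thesis by simp
  qed
  have Ginv: "G ** matrix_inv G = mat 1" using pd_invertible[OF Gpd] invertible_matrix_inv by blast
  have S1sym: "transpose S1 = S1" using S1 sym_psd_def by blast
  have Rsym: "transpose (R k) = R k" using Rk sym_pd_def by blast
  have Gsym: "transpose G = G" using S1sym Rsym by (simp add: G_def matrix_transpose_mul transpose_plus matrix_mul_assoc)
  have Qsym: "transpose (Q k) = Q k" using Qk sym_psd_def by blast
  have Ssym: "transpose S = S"
    using Qsym S1sym Gsym by (simp add: S_def transpose_plus transpose_minus matrix_transpose_mul matrix_mul_assoc)
  have "0 \<le> x \<bullet> (S *v x)" for x
  proof -
    have id: "(A *v x + B *v (- (K *v x)) + 0) \<bullet> (S1 *v (A *v x + B *v (- (K *v x)) + 0)) + x \<bullet> (Q k *v x) + (- (K *v x)) \<bullet> (R k *v (- (K *v x)))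
       = x \<bullet> (S *v x) + ((- (K *v x)) + K *v x) \<bullet> (G *v ((- (K *v x)) + K *v x)) + 0 \<bullet> (S1 *v 0)
         + 2 * (0 \<bullet> (S1 *v (A *v x + B *v (- (K *v x)))))"
      by (rule riccati_identity[OF S1sym Rsym G_def Ginv K_def S_def])
    have a: "0 \<le> (A *v x + B *v (- (K *v x)) + 0) \<bullet> (S1 *v (A *v x + B *v (- (K *v x)) + 0))"
      using S1 unfolding sym_psd_def by blast
    have b: "0 \<le> x \<bullet> (Q k *v x)" using Qk unfolding sym_psd_def by blast
    have c: "0 \<le> (- (K *v x)) \<bullet> (R k *v (- (K *v x)))" using Rk unfolding sym_pd_def
      by (metis inner_zero_left order_less_imp_le order_refl)
    from id a b c show ?thesis by simp
  qed
  then show ?case using SS Ssym unfolding sym_psd_def by simp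
qed

lemma ricS_psd:
  assumes Q: "\<And>k. k \<le> Suc N \<Longrightarrow> sym_psd (Q k)" and R: "\<And>k. k \<le> N \<Longrightarrow> sym_pd (R k)"
    and "k \<le> Suc N"
  shows "sym_psd (ricS A B Q R N k)"
  unfolding ricS_def using ric_back_psd[OF Q R] assms(3) by simp

lemma ricS_step:
  assumes "k \<le> N"
  shows "ricS A B Q R N k = Q k + transpose A ** ricS A B Q R N (Suc k) ** A
     - transpose (ricK A B Q R N k) ** (R k + transpose B ** ricS A B Q R N (Suc k) ** B) ** ricK A B Q R N k"
proof -
  have "Suc N - k = Suc (N - k)" using assms by simp
  moreover have "N - (N - k) = k" using assms by simp
  moreover have "Suc N - Suc k = N - k" by simp
  ultimately show ?thesis unfolding ricS_def ricK_def by (simp add: Let_def)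
qed

lemma ricS_last: "ricS A B Q R N (Suc N) = Q (Suc N)"
  unfolding ricS_def by simp

lemma ric_G_inv:
  assumes Q: "\<And>k. k \<le> Suc N \<Longrightarrow> sym_psd (Q k)" and R: "\<And>k. k \<le> N \<Longrightarrow> sym_pd (R k)"
    and kN: "k \<le> N"
  shows "(R k + transpose B ** ricS A B Q R N (Suc k) ** B) ** matrix_inv (R k + transpose B ** ricS A B Q R N (Suc k) ** B) = mat 1"
proof -
  define S1 where "S1 = ricS A B Q R N (Suc k)"
  have S1: "sym_psd S1" using ricS_psd[OF Q R] kN S1_def by simp
  define G where "G = R k + transpose B ** S1 ** B"
  have Rk: "sym_pd (R k)" using R kN by simp
  have Gpd: "0 < x \<bullet> (G *v x)" if "x \<noteq> 0" for x
  proof -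
    have "x \<bullet> (G *v x) = x \<bullet> (R k *v x) + (B *v x) \<bullet> (S1 *v (B *v x))"
      by (simp only: G_def matrix_vector_mult_add_rdistrib inner_add_right inner_mm)
    moreover have "0 < x \<bullet> (R k *v x)" using Rk that unfolding sym_pd_def by blast
    moreover have "0 \<le> (B *v x) \<bullet> (S1 *v (B *v x))" using S1 unfolding sym_psd_def by blast
    ultimately show ?thesis by simp
  qed
  show ?thesis using pd_invertible[OF Gpd] invertible_matrix_inv G_def S1_def by blast
qed


section \<open>Deterministic closed loop\<close>

lemma hist_mono:
  "j \<le> k \<Longrightarrow> fst (hist A B K eta x0 w (k + d)) j = fst (hist A B K eta x0 w k) j"
  "j < k \<Longrightarrow> snd (hist A B K eta x0 w (k + d)) j = snd (hist A B K eta x0 w k) j"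
  by (induction d) (auto simp: Let_def)

lemma hist_fst_cl_x: "j \<le> k \<Longrightarrow> fst (hist A B K eta x0 w k) j = cl_x A B K eta x0 w j"
  unfolding cl_x_def using hist_mono(1)[of j j A B K eta x0 w "k - j"] by simp

lemma hist_snd_cl_u: "j < k \<Longrightarrow> snd (hist A B K eta x0 w k) j = cl_u A B K eta x0 w j"
  unfolding cl_u_def using hist_mono(2)[of j "Suc j" A B K eta x0 w "k - Suc j"] by simp

lemma cl_x_0: "cl_x A B K eta x0 w 0 = x0"
  unfolding cl_x_def by simp

definition xhat where
  "xhat A B K eta x0 w k = mpow A (eta k) *v cl_x A B K eta x0 w (k - eta k)
      + (\<Sum>t\<in>{1..eta k}. (mpow A (t - 1) ** B) *v cl_u A B K eta x0 w (k - t))"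

lemma cl_u_eq:
  assumes "eta k \<le> k"
  shows "cl_u A B K eta x0 w k = - (K k *v xhat A B K eta x0 w k)"
proof -
  have s: "(\<Sum>t\<in>{1..eta k}. (mpow A (t - 1) ** B) *v snd (hist A B K eta x0 w k) (k - t))
      = (\<Sum>t\<in>{1..eta k}. (mpow A (t - 1) ** B) *v cl_u A B K eta x0 w (k - t))"
    by (rule sum.cong) (use assms in \<open>auto intro!: arg_cong[where f="(*v) _"] hist_snd_cl_u\<close>)
  have "cl_u A B K eta x0 w k = - (K k *v (mpow A (eta k) *v fst (hist A B K eta x0 w k) (k - eta k)
      + (\<Sum>t\<in>{1..eta k}. (mpow A (t - 1) ** B) *v snd (hist A B K eta x0 w k) (k - t))))"
    by (simp add: cl_u_def Let_def)
  also have "\<dots> = - (K k *v xhat A B K eta x0 w k)"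
    unfolding xhat_def s by (simp add: hist_fst_cl_x)
  finally show ?thesis .
qed

lemma cl_x_Suc: "cl_x A B K eta x0 w (Suc k) = A *v cl_x A B K eta x0 w k + B *v cl_u A B K eta x0 w k + w k"
  unfolding cl_x_def cl_u_def by (simp add: Let_def)

lemma mpow_commute: "mpow A n ** A = A ** mpow A n"
  by (induction n) (simp_all, metis matrix_mul_assoc)

lemma cl_x_unroll:
  "j \<le> k \<Longrightarrow> cl_x A B K eta x0 w k = mpow A j *v cl_x A B K eta x0 w (k - j)
     + (\<Sum>t\<in>{1..j}. mpow A (t - 1) *v (B *v cl_u A B K eta x0 w (k - t) + w (k - t)))"
proof (induction j)
  case 0
  then show ?case by simp
next
  case (Suc j)
  have e: "k - j = Suc (k - Suc j)" using Suc.prems by simp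
  have "mpow A j *v cl_x A B K eta x0 w (k - j)
     = mpow A (Suc j) *v cl_x A B K eta x0 w (k - Suc j) + mpow A j *v (B *v cl_u A B K eta x0 w (k - Suc j) + w (k - Suc j))"
    unfolding e cl_x_Suc
    by (simp add: matrix_vector_right_distrib matrix_vector_mul_assoc mpow_commute add.assoc)
  then show ?case using Suc by (simp add: add.assoc)
qed

definition evec where
  "evec A w k e = (\<Sum>t\<in>{1..e}. mpow A (t - 1) *v w (k - t))"

lemma x_minus_xhat:
  assumes "eta k \<le> k"
  shows "cl_x A B K eta x0 w k - xhat A B K eta x0 w k = evec A w k (eta k)"
proof -
  have h: "cl_x A B K eta x0 w k = mpow A (eta k) *v cl_x A B K eta x0 w (k - eta k)
     + (\<Sum>t\<in>{1..eta k}. mpow A (t - 1) *v (B *v cl_u A B K eta x0 w (k - t) + w (k - t)))"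
    by (rule cl_x_unroll[OF assms])
  show ?thesis
    unfolding xhat_def evec_def
    by (subst h) (simp add: matrix_vector_right_distrib sum.distrib matrix_vector_mul_assoc[symmetric])
qed


lemma stage_identity:
  fixes A :: "real^'n^'n" and B :: "real^'m^'n" and x0 :: "real^'n" and w :: "nat \<Rightarrow> real^'n" and eta :: "nat \<Rightarrow> nat"
  assumes Q: "\<And>k. k \<le> Suc N \<Longrightarrow> sym_psd (Q k)" and R: "\<And>k. k \<le> N \<Longrightarrow> sym_pd (R k)"
    and kN: "k \<le> N" and ek: "eta k \<le> k"
  defines "X \<equiv> cl_x A B (ricK A B Q R N) eta x0 w" and "U \<equiv> cl_u A B (ricK A B Q R N) eta x0 w"
  shows "X (Suc k) \<bullet> (ricS A B Q R N (Suc k) *v X (Suc k)) + X k \<bullet> (Q k *v X k) + U k \<bullet> (R k *v U k)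
    = X k \<bullet> (ricS A B Q R N k *v X k)
      + evec A w k (eta k) \<bullet> (ricGamma A B Q R N k *v evec A w k (eta k))
      + w k \<bullet> (ricS A B Q R N (Suc k) *v w k)
      + 2 * (w k \<bullet> (ricS A B Q R N (Suc k) *v (A *v X k + B *v U k)))"
proof -
  define S1 where "S1 = ricS A B Q R N (Suc k)"
  define G where "G = R k + transpose B ** S1 ** B"
  define K where "K = ricK A B Q R N k"
  have S1sym: "transpose S1 = S1" using ricS_psd[where N=N and Q=Q and R=R and k="Suc k", OF Q R] kN S1_def sym_psd_def by auto
  have Rsym: "transpose (R k) = R k" using R kN sym_pd_def by blast
  have Ginv: "G ** matrix_inv G = mat 1" using ric_G_inv[where N=N and Q=Q and R=R, OF Q R kN] G_def S1_def by simp
  have Kd: "K = matrix_inv G ** transpose B ** S1 ** A" unfolding K_def ricK_def G_def S1_def ..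
  have Sd: "ricS A B Q R N k = Q k + transpose A ** S1 ** A - transpose K ** G ** K"
    using ricS_step[OF kN] unfolding S1_def G_def K_def .
  note id = riccati_identity[OF S1sym Rsym G_def Ginv Kd Sd, of "X k" "U k" "w k"]
  define e where "e = evec A w k (eta k)"
  have Xh: "X k - xhat A B (ricK A B Q R N) eta x0 w k = e"
    unfolding X_def e_def by (rule x_minus_xhat[where eta=eta and k=k, OF ek])
  have Uk: "U k = - (K *v xhat A B (ricK A B Q R N) eta x0 w k)"
    unfolding U_def K_def by (rule cl_u_eq[where eta=eta and k=k, OF ek])
  have UK: "U k + K *v X k = K *v e"
    using Xh Uk by (metis add.commute diff_conv_add_uminus matrix_vector_mult_diff_distrib)
  have Gam: "ricGamma A B Q R N k = transpose K ** G ** K"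
    unfolding ricGamma_def K_def G_def S1_def by (simp add: add.commute)
  have q: "(K *v e) \<bullet> (G *v (K *v e)) = e \<bullet> (ricGamma A B Q R N k *v e)"
    unfolding Gam by (simp only: inner_mm)
  have XS: "A *v X k + B *v U k + w k = X (Suc k)" unfolding X_def U_def by (rule cl_x_Suc[symmetric])
  show ?thesis
    using id q unfolding UK XS S1_def e_def by simp
qed

lemma cost_decomp:
  fixes A :: "real^'n^'n" and B :: "real^'m^'n" and x0 :: "real^'n" and w :: "nat \<Rightarrow> real^'n" and eta :: "nat \<Rightarrow> nat"
  assumes Q: "\<And>k. k \<le> Suc N \<Longrightarrow> sym_psd (Q k)" and R: "\<And>k. k \<le> N \<Longrightarrow> sym_pd (R k)"
    and ek: "\<And>k. k \<le> N \<Longrightarrow> eta k \<le> k"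
  defines "X \<equiv> cl_x A B (ricK A B Q R N) eta x0 w" and "U \<equiv> cl_u A B (ricK A B Q R N) eta x0 w"
  shows "cl_cost A B (ricK A B Q R N) Q R \<theta> N eta x0 w
    = x0 \<bullet> (ricS A B Q R N 0 *v x0)
      + (\<Sum>k\<in>{0..N}. - \<theta> k * real (eta k)
          + evec A w k (eta k) \<bullet> (ricGamma A B Q R N k *v evec A w k (eta k))
          + w k \<bullet> (ricS A B Q R N (Suc k) *v w k)
          + 2 * (w k \<bullet> (ricS A B Q R N (Suc k) *v (A *v X k + B *v U k))))"
proof -
  define a where "a k = X k \<bullet> (ricS A B Q R N k *v X k)" for k
  define T where "T k = evec A w k (eta k) \<bullet> (ricGamma A B Q R N k *v evec A w k (eta k))
          + w k \<bullet> (ricS A B Q R N (Suc k) *v w k)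
          + 2 * (w k \<bullet> (ricS A B Q R N (Suc k) *v (A *v X k + B *v U k)))" for k
  have st: "X k \<bullet> (Q k *v X k) + U k \<bullet> (R k *v U k) = (a k - a (Suc k)) + T k" if "k \<in> {0..N}" for k
  proof -
    have kN: "k \<le> N" using that by simp
    have "X (Suc k) \<bullet> (ricS A B Q R N (Suc k) *v X (Suc k)) + X k \<bullet> (Q k *v X k) + U k \<bullet> (R k *v U k)
    = X k \<bullet> (ricS A B Q R N k *v X k)
      + evec A w k (eta k) \<bullet> (ricGamma A B Q R N k *v evec A w k (eta k))
      + w k \<bullet> (ricS A B Q R N (Suc k) *v w k)
      + 2 * (w k \<bullet> (ricS A B Q R N (Suc k) *v (A *v X k + B *v U k)))"
      unfolding X_def U_def
      by (rule stage_identity) (use Q R kN ek in auto)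
    then show ?thesis unfolding a_def T_def by simp
  qed
  have "cl_cost A B (ricK A B Q R N) Q R \<theta> N eta x0 w
      = a (Suc N) + (\<Sum>k\<in>{0..N}. - \<theta> k * real (eta k) + (X k \<bullet> (Q k *v X k) + U k \<bullet> (R k *v U k)))"
    unfolding cl_cost_def a_def X_def U_def by (simp add: ricS_last Let_def algebra_simps)
  also have "\<dots> = a (Suc N) + (\<Sum>k\<in>{0..N}. (- \<theta> k * real (eta k) + T k) + (a k - a (Suc k)))"
    by (rule arg_cong[where f="\<lambda>s. a (Suc N) + s"], rule sum.cong) (simp_all add: st)
  also have "\<dots> = a (Suc N) + (\<Sum>k\<in>{0..N}. - \<theta> k * real (eta k) + T k) + (a 0 - a (Suc N))"
    by (simp add: sum.distrib atLeast0AtMost sum_telescope)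
  finally show ?thesis unfolding T_def a_def X_def cl_x_0
    by (simp add: algebra_simps)
qed


section \<open>Square integrability\<close>

definition goods :: "'a measure \<Rightarrow> 'a measure \<Rightarrow> ('a \<Rightarrow> real) \<Rightarrow> bool" where
  "goods M N f \<longleftrightarrow> f \<in> borel_measurable N \<and> integrable M (\<lambda>x. (f x)^2)"

definition goodv :: "'a measure \<Rightarrow> 'a measure \<Rightarrow> ('a \<Rightarrow> real^'n) \<Rightarrow> bool" where
  "goodv M N X \<longleftrightarrow> (\<forall>i. goods M N (\<lambda>x. X x $ i))"

lemma goodv_measurable: "goodv M N X \<Longrightarrow> X \<in> borel_measurable N"
  unfolding goodv_def goods_def
  by (subst borel_measurable_euclidean_space) (auto simp: Basis_vec_def inner_axis)


context prob_space
begin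

lemma goods_M: "subalgebra M N \<Longrightarrow> goods M N f \<Longrightarrow> f \<in> borel_measurable M"
  unfolding goods_def using measurable_from_subalg by blast

lemma goods_const: "subalgebra M N \<Longrightarrow> goods M N (\<lambda>_. c)"
  unfolding goods_def by simp

lemma goods_add:
  assumes N: "subalgebra M N" and f: "goods M N f" and g: "goods M N g"
  shows "goods M N (\<lambda>x. f x + g x)"
proof -
  have [measurable]: "f \<in> borel_measurable M" "g \<in> borel_measurable M" using goods_M[OF N] f g by auto
  have "integrable M (\<lambda>x. 2 * (f x)^2 + 2 * (g x)^2)" using f g unfolding goods_def by auto
  then have "integrable M (\<lambda>x. (f x + g x)^2)"
  proof (rule Bochner_Integration.integrable_bound)
    show "(\<lambda>x. (f x + g x)\<^sup>2) \<in> borel_measurable M" by measurable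
    have "(a + b)^2 \<le> 2 * a^2 + 2 * b^2" for a b :: real
    proof -
      have "2*a^2+2*b^2 - (a+b)^2 = (a-b)^2" by (simp add: power2_eq_square algebra_simps)
      then show ?thesis using zero_le_power2[of "a-b"] by linarith
    qed
    then show "AE x in M. norm ((f x + g x)\<^sup>2) \<le> norm (2 * (f x)\<^sup>2 + 2 * (g x)\<^sup>2)" by simp
  qed
  moreover have "(\<lambda>x. f x + g x) \<in> borel_measurable N" using f g unfolding goods_def by (simp add: borel_measurable_add)
  ultimately show ?thesis unfolding goods_def by simp
qed

lemma goods_cmult: "goods M N f \<Longrightarrow> goods M N (\<lambda>x. c * f x)"
  unfolding goods_def by (auto simp: power_mult_distrib)

lemma goods_neg: "goods M N f \<Longrightarrow> goods M N (\<lambda>x. - f x)"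
  using goods_cmult[of N f "-1"] by simp

lemma goods_sum:
  assumes N: "subalgebra M N" shows "(\<And>i. i \<in> I \<Longrightarrow> goods M N (f i)) \<Longrightarrow> goods M N (\<lambda>x. \<Sum>i\<in>I. f i x)"
proof (induction I rule: infinite_finite_induct)
  case (infinite A)
  then show ?case using goods_const[OF N] by simp
next
  case empty
  then show ?case using goods_const[OF N] by simp
next
  case (insert i F)
  then show ?case using goods_add[OF N, of "f i" "\<lambda>x. \<Sum>i\<in>F. f i x"] by simp
qed

lemma goods_prod:
  assumes N: "subalgebra M N" and f: "goods M N f" and g: "goods M N g"
  shows "integrable M (\<lambda>x. f x * g x)"
proof -
  have [measurable]: "f \<in> borel_measurable M" "g \<in> borel_measurable M" using goods_M[OF N] f g by auto
  have "integrable M (\<lambda>x. (f x)^2 + (g x)^2)" using f g unfolding goods_def by auto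
  then show ?thesis
  proof (rule Bochner_Integration.integrable_bound)
    show "(\<lambda>x. f x * g x) \<in> borel_measurable M" by measurable
    have "\<bar>a * b\<bar> \<le> a^2 + b^2" for a b :: real
    proof -
      have "a^2 + b^2 - 2 * (\<bar>a\<bar> * \<bar>b\<bar>) = (\<bar>a\<bar> - \<bar>b\<bar>)^2" by (simp add: power2_eq_square algebra_simps)
      then have "2 * (\<bar>a\<bar> * \<bar>b\<bar>) \<le> a^2 + b^2" using zero_le_power2[of "\<bar>a\<bar> - \<bar>b\<bar>"] by linarith
      moreover have "0 \<le> \<bar>a\<bar> * \<bar>b\<bar>" by simp
      ultimately have "\<bar>a\<bar> * \<bar>b\<bar> \<le> a^2 + b^2" by linarith
      then show ?thesis by (simp add: abs_mult)
    qed
    then show "AE x in M. norm (f x * g x) \<le> norm ((f x)\<^sup>2 + (g x)\<^sup>2)" by simp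
  qed
qed

lemma goods_case:
  fixes eta :: "'a \<Rightarrow> nat"
  assumes N: "subalgebra M N" and eta: "eta \<in> measurable N (count_space UNIV)"
    and b: "\<And>x. x \<in> space M \<Longrightarrow> eta x \<le> b" and f: "\<And>n. n \<le> b \<Longrightarrow> goods M N (f n)"
  shows "goods M N (\<lambda>x. f (eta x) x)"
proof -
  have sp: "space N = space M" using N unfolding subalgebra_def by simp
  have fm: "f (min n b) \<in> borel_measurable N" for n
    using f[of "min n b"] unfolding goods_def by simp
  have m: "(\<lambda>x. f (min (eta x) b) x) \<in> borel_measurable N"
    by (rule measurable_compose_countable[where f="\<lambda>n. f (min n b)", OF _ eta]) (use fm in auto)
  have eq: "x \<in> space N \<Longrightarrow> f (min (eta x) b) x = f (eta x) x" for x using b sp by (simp add: min_def)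
  have m2: "(\<lambda>x. f (eta x) x) \<in> borel_measurable N"
    using m by (subst measurable_cong[where g="\<lambda>x. f (min (eta x) b) x"]) (auto simp: eq)
  have mM: "(\<lambda>x. f (eta x) x) \<in> borel_measurable M" using measurable_from_subalg[OF N m2] .
  have "integrable M (\<lambda>x. \<Sum>n\<in>{..b}. (f n x)^2)" using f unfolding goods_def by auto
  then have "integrable M (\<lambda>x. (f (eta x) x)^2)"
  proof (rule Bochner_Integration.integrable_bound)
    show "(\<lambda>x. (f (eta x) x)\<^sup>2) \<in> borel_measurable M" using mM by measurable
    have "(f (eta x) x)^2 \<le> (\<Sum>n\<in>{..b}. (f n x)^2)" if "x \<in> space M" for x
      by (rule member_le_sum) (use b that in auto)
    then show "AE x in M. norm ((f (eta x) x)\<^sup>2) \<le> norm (\<Sum>n\<in>{..b}. (f n x)\<^sup>2)"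
      by (intro AE_I2) (simp add: sum_nonneg)
  qed
  then show ?thesis using m2 unfolding goods_def by simp
qed

lemma goodv_add: "subalgebra M N \<Longrightarrow> goodv M N X \<Longrightarrow> goodv M N Y \<Longrightarrow> goodv M N (\<lambda>x. X x + Y x)"
  unfolding goodv_def using goods_add by simp

lemma goodv_neg: "goodv M N X \<Longrightarrow> goodv M N (\<lambda>x. - X x)"
  unfolding goodv_def using goods_neg by simp

lemma goodv_const: "subalgebra M N \<Longrightarrow> goodv M N (\<lambda>x. c)"
  unfolding goodv_def using goods_const by simp

lemma goodv_mv: "subalgebra M N \<Longrightarrow> goodv M N X \<Longrightarrow> goodv M N (\<lambda>x. C *v X x)"
  unfolding goodv_def matrix_vector_mult_def
  by (auto intro!: goods_sum goods_cmult)

lemma goodv_sum: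
  assumes N: "subalgebra M N" shows "(\<And>i. i \<in> I \<Longrightarrow> goodv M N (f i)) \<Longrightarrow> goodv M N (\<lambda>x. \<Sum>i\<in>I. f i x)"
  unfolding goodv_def by (auto simp: sum_component intro!: goods_sum[OF N])

lemma goodv_case:
  fixes eta :: "'a \<Rightarrow> nat"
  assumes N: "subalgebra M N" and eta: "eta \<in> measurable N (count_space UNIV)"
    and b: "\<And>x. x \<in> space M \<Longrightarrow> eta x \<le> b" and f: "\<And>n. n \<le> b \<Longrightarrow> goodv M N (f n)"
  shows "goodv M N (\<lambda>x. f (eta x) x)"
  unfolding goodv_def
proof
  fix i show "goods M N (\<lambda>x. f (eta x) x $ i)"
    using goods_case[OF N eta b, of "\<lambda>n x. f n x $ i"] f unfolding goodv_def by auto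
qed

lemma goodv_inner:
  assumes N: "subalgebra M N" and X: "goodv M N X" and Y: "goodv M N Y"
  shows "integrable M (\<lambda>x. X x \<bullet> Y x)"
  unfolding inner_vec_def using X Y unfolding goodv_def
  by (auto intro!: Bochner_Integration.integrable_sum goods_prod[OF N])

lemma goodv_mono: "subalgebra M N \<Longrightarrow> subalgebra M N' \<Longrightarrow> sets N \<subseteq> sets N' \<Longrightarrow> goodv M N X \<Longrightarrow> goodv M N' X"
  unfolding goodv_def goods_def subalgebra_def
  by (auto intro: measurable_mono[THEN subsetD, rotated])

lemma subalgebra_refl: "subalgebra M M"
  unfolding subalgebra_def by simp

end


lemma vec_nth_measurable: "(X :: 'a \<Rightarrow> real^'n) \<in> borel_measurable N \<Longrightarrow> (\<lambda>x. X x $ i) \<in> borel_measurable N"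
proof -
  assume "X \<in> borel_measurable N"
  then have "(\<lambda>x. X x \<bullet> axis i 1) \<in> borel_measurable N"
    using borel_measurable_euclidean_space[of X N] by (auto simp: Basis_vec_def)
  then show ?thesis by (simp add: inner_axis)
qed

lemma mv_measurable[measurable]:
  assumes "(X :: 'a \<Rightarrow> real^'n) \<in> borel_measurable N"
  shows "(\<lambda>x. (C::real^'n^'m) *v X x) \<in> borel_measurable N"
proof -
  have "(\<lambda>x. (C *v X x) \<bullet> axis i 1) \<in> borel_measurable N" for i
    unfolding inner_axis matrix_vector_mult_def using vec_nth_measurable[OF assms] by simp
  then show ?thesis
    by (subst borel_measurable_euclidean_space) (auto simp: Basis_vec_def)
qed



lemma normal_sq_integrable:
  assumes "0 < (\<sigma>::real)"
  shows "integrable lborel (\<lambda>x. normal_density \<mu> \<sigma> x * x^2)"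
proof -
  have i2: "integrable lborel (\<lambda>x. normal_density \<mu> \<sigma> x * (x - \<mu>)^2)"
    using integrable_normal_moment[OF assms] .
  have i1: "integrable lborel (\<lambda>x. normal_density \<mu> \<sigma> x * (x - \<mu>)^1)"
    using integrable_normal_moment[OF assms] .
  have i0: "integrable lborel (\<lambda>x. normal_density \<mu> \<sigma> x * (x - \<mu>)^0)"
    using integrable_normal_moment[OF assms] .
  have "integrable lborel (\<lambda>x. normal_density \<mu> \<sigma> x * (x - \<mu>)^2 + 2 * \<mu> * (normal_density \<mu> \<sigma> x * (x - \<mu>)^1)
     + \<mu>^2 * (normal_density \<mu> \<sigma> x * (x - \<mu>)^0))"
    using i0 i1 i2 by auto
  then show ?thesis by (rule back_subst[where P="integrable lborel"]) (auto simp: power2_eq_square algebra_simps)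
qed

lemma gaussian_goodv:
  assumes P: "prob_space M" and G: "gaussian_vec M X m C" and C: "\<forall>a. 0 \<le> a \<bullet> (C *v a)"
  shows "goodv M M X"
  unfolding goodv_def goods_def
proof (intro allI conjI)
  fix i
  interpret prob_space M by (rule P)
  have Xm: "X \<in> borel_measurable M" using G gaussian_vec_def by blast
  show mi: "(\<lambda>x. X x $ i) \<in> borel_measurable M" by (rule vec_nth_measurable[OF Xm])
  define a :: "real^'b" where "a = axis i 1"
  have ax: "a \<bullet> v = v $ i" for v unfolding a_def by (simp add: inner_axis')
  have g: "if a \<bullet> (C *v a) = 0 then (AE \<omega> in M. a \<bullet> X \<omega> = a \<bullet> m)
          else distributed M lborel (\<lambda>\<omega>. a \<bullet> X \<omega>)
                 (\<lambda>x. ennreal (normal_density (a \<bullet> m) (sqrt (a \<bullet> (C *v a))) x))"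
    using G unfolding gaussian_vec_def by blast
  show "integrable M (\<lambda>x. (X x $ i)\<^sup>2)"
  proof (cases "a \<bullet> (C *v a) = 0")
    case True
    then have "AE \<omega> in M. X \<omega> $ i = m $ i" using g ax by simp
    then have "AE \<omega> in M. (X \<omega> $ i)^2 = (m $ i)^2" by auto
    then show ?thesis
      by (subst integrable_cong_AE[where g="\<lambda>_. (m $ i)^2"]) (use mi in auto)
  next
    case False
    then have pos: "0 < sqrt (a \<bullet> (C *v a))" using C by (metis order_le_less real_sqrt_gt_0_iff)
    have d: "distributed M lborel (\<lambda>\<omega>. X \<omega> $ i) (\<lambda>x. ennreal (normal_density (a \<bullet> m) (sqrt (a \<bullet> (C *v a))) x))"
      using g False ax by simp
    have "integrable lborel (\<lambda>x. normal_density (a \<bullet> m) (sqrt (a \<bullet> (C *v a))) x * x^2)"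
      by (rule normal_sq_integrable[OF pos])
    then show ?thesis
      using distributed_integrable[OF d, of "\<lambda>x. x^2"] by auto
  qed
qed


lemma (in prob_space) hist_good:
  fixes eta :: "nat \<Rightarrow> 'a \<Rightarrow> nat" and x0 :: "'a \<Rightarrow> real^'n" and w :: "nat \<Rightarrow> 'a \<Rightarrow> real^'n"
    and A :: "real^'n^'n" and B :: "real^'m^'n" and K :: "nat \<Rightarrow> real^'n^'m"
  assumes N: "subalgebra M N" and x0: "goodv M N x0"
    and w: "\<And>j. j < k \<Longrightarrow> goodv M N (w j)"
    and eta: "\<And>j. j < k \<Longrightarrow> eta j \<in> measurable N (count_space UNIV)"
    and etab: "\<And>j x. j < k \<Longrightarrow> x \<in> space M \<Longrightarrow> eta j x \<le> j"
  shows "goodv M N (\<lambda>x. fst (hist A B K (\<lambda>t. eta t x) (x0 x) (\<lambda>t. w t x) k) j)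
       \<and> goodv M N (\<lambda>x. snd (hist A B K (\<lambda>t. eta t x) (x0 x) (\<lambda>t. w t x) k) j)"
  using w eta etab
proof (induction k arbitrary: j)
  case 0
  then show ?case using x0 goodv_const[OF N, of 0] by simp
next
  case (Suc k)
  define xs where "xs x = fst (hist A B K (\<lambda>t. eta t x) (x0 x) (\<lambda>t. w t x) k)" for x
  define us where "us x = snd (hist A B K (\<lambda>t. eta t x) (x0 x) (\<lambda>t. w t x) k)" for x
  define f where "f n x = mpow A n *v xs x (k - n) + (\<Sum>t\<in>{1..n}. (mpow A (t - 1) ** B) *v us x (k - t))" for n x
  define uk where "uk x = - (K k *v f (eta k x) x)" for x
  have h: "hist A B K (\<lambda>t. eta t x) (x0 x) (\<lambda>t. w t x) (Suc k)
      = ((xs x)(Suc k := A *v xs x k + B *v uk x + w k x), (us x)(k := uk x))" for x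
    by (simp add: Let_def xs_def us_def uk_def f_def)
  have IH: "goodv M N (\<lambda>x. xs x j) \<and> goodv M N (\<lambda>x. us x j)" for j
    unfolding xs_def us_def by (rule Suc.IH) (use Suc.prems in auto)
  have gf: "goodv M N (f n)" for n
    unfolding f_def
    by (intro goodv_add[OF N] goodv_mv[OF N] goodv_sum[OF N]) (use IH in auto)
  have gfe: "goodv M N (\<lambda>x. f (eta k x) x)"
    by (rule goodv_case[OF N Suc.prems(2)[of k]]) (use Suc.prems(3)[of k] gf in auto)
  have guk: "goodv M N uk"
    unfolding uk_def by (intro goodv_neg goodv_mv[OF N] gfe)
  have gx: "goodv M N (\<lambda>x. A *v xs x k + B *v uk x + w k x)"
    by (intro goodv_add[OF N] goodv_mv[OF N]) (use IH guk Suc.prems(1)[of k] in auto)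
  show ?case
    unfolding h using IH guk gx by (cases "j = Suc k"; cases "j = k") auto
qed


section \<open>Queuing sigma algebras\<close>

lemma Fq_space[simp]: "space (Fq M w k) = space M"
  unfolding Fq_def by simp

lemma Fq_restrict_meas: "(\<lambda>\<omega>. restrict (\<lambda>t. w t \<omega>) {..<k}) \<in> measurable (Fq M w k) (Pi\<^sub>M {..<k} (\<lambda>_. borel))"
  unfolding Fq_def by (rule measurable_vimage_algebra1) (auto simp: space_PiM)

lemma Fq_w: "t < k \<Longrightarrow> w t \<in> borel_measurable (Fq M w k)"
proof -
  assume t: "t < k"
  have "(\<lambda>\<omega>. (restrict (\<lambda>t. w t \<omega>) {..<k}) t) \<in> borel_measurable (Fq M w k)"
    by (rule measurable_compose[OF Fq_restrict_meas measurable_component_singleton]) (use t in simp)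
  then show ?thesis using t by simp
qed

lemma Fq_le:
  assumes sp: "space L = space M" and w: "\<And>t. t < k \<Longrightarrow> w t \<in> borel_measurable L"
    and f: "f \<in> measurable (Fq M w k) C"
  shows "f \<in> measurable L C"
proof -
  have "(\<lambda>x. x) \<in> measurable L (Fq M w k)"
    unfolding Fq_def
    by (rule measurable_vimage_algebra2) (auto simp: sp intro!: measurable_restrict w)
  from measurable_comp[OF this f] show ?thesis by (simp add: comp_def)
qed

lemma Fq_sets:
  assumes w: "\<And>t. t < k \<Longrightarrow> w t \<in> borel_measurable M"
  shows "subalgebra M (Fq M w k)"
proof -
  have "A \<in> sets M" if A: "A \<in> sets (Fq M w k)" for A
  proof -
    have "(indicator A :: 'a \<Rightarrow> real) \<in> borel_measurable (Fq M w k)" using A by simp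
    then have "(indicator A :: 'a \<Rightarrow> real) \<in> borel_measurable M" using Fq_le[where L=M and M=M and k=k and w=w] w by blast
    moreover have "A \<subseteq> space M" using sets.sets_into_space[OF A] by simp
    ultimately show ?thesis by (metis borel_measurable_indicator_iff Int_absorb2)
  qed
  then show ?thesis unfolding subalgebra_def by auto
qed

lemma (in prob_space) Fq_sigma_finite:
  assumes w: "\<And>t. t < k \<Longrightarrow> w t \<in> borel_measurable M"
  shows "sigma_finite_subalgebra M (Fq M w k)"
proof -
  have "finite_measure_subalgebra M (Fq M w k)"
    unfolding finite_measure_subalgebra_def finite_measure_subalgebra_axioms_def
    using Fq_sets[OF w] finite_measure_axioms by simp
  then show ?thesis by (rule finite_measure_subalgebra_is_sigma_finite)
qed


lemma (in prob_space) integrable_Min: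
  assumes S: "finite S" "S \<noteq> {}" and f: "\<And>e. e \<in> S \<Longrightarrow> integrable M (f e)"
  shows "integrable M (\<lambda>\<omega>. Min ((\<lambda>e. f e \<omega>) ` S) :: real)"
proof -
  have "integrable M (\<lambda>\<omega>. \<Sum>e\<in>S. \<bar>f e \<omega>\<bar>)" using f by auto
  then show ?thesis
  proof (rule Bochner_Integration.integrable_bound)
    show "(\<lambda>\<omega>. Min ((\<lambda>e. f e \<omega>) ` S)) \<in> borel_measurable M"
      using S f by (intro borel_measurable_Min) auto
    have "\<bar>Min ((\<lambda>e. f e \<omega>) ` S)\<bar> \<le> (\<Sum>e\<in>S. \<bar>f e \<omega>\<bar>)" for \<omega>
    proof -
      have "Min ((\<lambda>e. f e \<omega>) ` S) \<in> (\<lambda>e. f e \<omega>) ` S" by (rule Min_in) (use S in auto)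
      then obtain e where e: "e \<in> S" "Min ((\<lambda>e. f e \<omega>) ` S) = f e \<omega>" by auto
      have "\<bar>f e \<omega>\<bar> \<le> (\<Sum>e\<in>S. \<bar>f e \<omega>\<bar>)" by (rule member_le_sum) (use e S in auto)
      then show ?thesis using e by simp
    qed
    then show "AE \<omega> in M. norm (Min ((\<lambda>e. f e \<omega>) ` S)) \<le> norm (\<Sum>e\<in>S. \<bar>f e \<omega>\<bar>)"
      by (intro AE_I2) (simp add: sum_nonneg)
  qed
qed

locale qsys = prob_space M for M :: "'a measure" +
  fixes A :: "real^'n^'n" and B :: "real^'m^'n" and Q :: "nat \<Rightarrow> real^'n^'n"
    and R :: "nat \<Rightarrow> real^'m^'m" and \<theta> :: "nat \<Rightarrow> real" and N :: nat
    and x0 :: "'a \<Rightarrow> real^'n" and w :: "nat \<Rightarrow> 'a \<Rightarrow> real^'n"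
  assumes wgood: "\<And>k. k \<le> N \<Longrightarrow> goodv M M (w k)" and x0good: "goodv M M x0"
    and Qpsd: "\<And>k. k \<le> Suc N \<Longrightarrow> sym_psd (Q k)" and Rpd: "\<And>k. k \<le> N \<Longrightarrow> sym_pd (R k)"
begin

lemma w_meas: "k \<le> N \<Longrightarrow> w k \<in> borel_measurable M"
  using wgood goodv_measurable by blast

lemma Fsf: "k \<le> Suc N \<Longrightarrow> sigma_finite_subalgebra M (Fq M w k)"
  by (rule Fq_sigma_finite) (auto intro: w_meas)

lemma Fsub: "k \<le> Suc N \<Longrightarrow> subalgebra M (Fq M w k)"
  by (rule Fq_sets) (auto intro: w_meas)

lemma w_goodF: "t < k \<Longrightarrow> k \<le> Suc N \<Longrightarrow> goodv M (Fq M w k) (w t)"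
  using wgood[of t] Fq_w[where t=t and k=k and M=M and w=w] vec_nth_measurable unfolding goodv_def goods_def by auto

lemma ek_goodM: "k \<le> Suc N \<Longrightarrow> goodv M M (ek A w k e)"
  unfolding ek_def
  by (intro goodv_sum[OF subalgebra_refl] goodv_mv[OF subalgebra_refl] wgood) auto

lemma ek_goodF: "1 \<le> k \<Longrightarrow> k \<le> Suc N \<Longrightarrow> goodv M (Fq M w k) (ek A w k e)"
  unfolding ek_def
  by (intro goodv_sum[OF Fsub] goodv_mv[OF Fsub] w_goodF) auto

lemma quad_int: "k \<le> Suc N \<Longrightarrow> integrable M (\<lambda>\<omega>. ek A w k e \<omega> \<bullet> (C *v ek A w k e \<omega>))"
  by (rule goodv_inner[OF subalgebra_refl ek_goodM goodv_mv[OF subalgebra_refl ek_goodM]])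

lemma Vq_back_int: "j \<le> Suc N \<Longrightarrow> integrable M (Vq_back M A B Q R \<theta> N w j a)"
proof (induction j arbitrary: a)
  case 0
  then show ?case by simp
next
  case (Suc j)
  define k where "k = N - j"
  have kN: "k \<le> N" unfolding k_def by simp
  interpret sf: sigma_finite_subalgebra M "Fq M w k" using Fsf kN by simp
  have T: "integrable M (\<lambda>\<omega>. - \<theta> k * real e + ek A w k e \<omega> \<bullet> (ricGamma A B Q R N k *v ek A w k e \<omega>)
                + real_cond_exp M (Fq M w k) (Vq_back M A B Q R \<theta> N w j e) \<omega>)" for e
    using quad_int[of k e] kN sf.real_cond_exp_int(1)[OF Suc.IH[of e]] Suc.prems by auto
  have "integrable M (\<lambda>\<omega>. Min ((\<lambda>e. - \<theta> k * real e + ek A w k e \<omega> \<bullet> (ricGamma A B Q R N k *v ek A w k e \<omega>)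
                + real_cond_exp M (Fq M w k) (Vq_back M A B Q R \<theta> N w j e) \<omega>) ` {0..a+1}))"
    by (rule integrable_Min) (use T in auto)
  then show ?case by (simp add: k_def Let_def)
qed

lemma Vq_int: "k \<le> Suc N \<Longrightarrow> integrable M (Vq M A B Q R \<theta> N w k a)"
  unfolding Vq_def by (rule Vq_back_int) simp

lemma Vq_last: "Vq M A B Q R \<theta> N w (Suc N) a \<omega> = 0"
  unfolding Vq_def by simp

lemma Vq_eq: "k \<le> N \<Longrightarrow> Vq M A B Q R \<theta> N w k a \<omega> = Min ((\<lambda>e. qobj M A B Q R \<theta> N w k e \<omega>) ` {0..a+1})"
proof -
  assume kN: "k \<le> N"
  have e1: "Suc N - k = Suc (N - k)" using kN by simp
  have e2: "N - (N - k) = k" using kN by simp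
  have e3: "Suc N - Suc k = N - k" by simp
  show ?thesis
    unfolding Vq_def qobj_def e1 e3 by (simp add: Let_def e2 algebra_simps)
qed

lemma qobj_measF: "1 \<le> k \<Longrightarrow> k \<le> N \<Longrightarrow> qobj M A B Q R \<theta> N w k e \<in> borel_measurable (Fq M w k)"
proof -
  assume k: "1 \<le> k" "k \<le> N"
  have [measurable]: "ek A w k e \<in> borel_measurable (Fq M w k)"
    using ek_goodF[of k e] k goodv_measurable by auto
  show ?thesis unfolding qobj_def[abs_def] by measurable
qed

lemma qobj_int: "k \<le> N \<Longrightarrow> integrable M (qobj M A B Q R \<theta> N w k e)"
proof -
  assume k: "k \<le> N"
  interpret sf: sigma_finite_subalgebra M "Fq M w k" using Fsf k by simp
  show ?thesis
    unfolding qobj_def[abs_def]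
    using quad_int[of k e] k sf.real_cond_exp_int(1)[OF Vq_int[of "Suc k" e]] by auto
qed

end

definition argmin_step :: "(nat \<Rightarrow> 'a \<Rightarrow> real) \<Rightarrow> nat \<Rightarrow> 'a \<Rightarrow> nat" where
  "argmin_step q a \<omega> = (LEAST e. e \<le> a + 1 \<and> (\<forall>e'\<le>a + 1. q e \<omega> \<le> q e' \<omega>))"

lemma argmin_step_prop:
  "argmin_step q a \<omega> \<le> a + 1 \<and> (\<forall>e'\<le>a + 1. q (argmin_step q a \<omega>) \<omega> \<le> q e' \<omega>)"
proof -
  have "Min ((\<lambda>e. q e \<omega>) ` {0..a+1}) \<in> (\<lambda>e. q e \<omega>) ` {0..a+1}" by (rule Min_in) auto
  then obtain e0 where e0: "e0 \<le> a + 1" "Min ((\<lambda>e. q e \<omega>) ` {0..a+1}) = q e0 \<omega>"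
    by (metis (no_types, lifting) atLeastAtMost_iff imageE)
  have "e0 \<le> a + 1 \<and> (\<forall>e'\<le>a + 1. q e0 \<omega> \<le> q e' \<omega>)"
    using e0 by (metis (no_types, lifting) Min_le atLeastAtMost_iff finite_atLeastAtMost finite_imageI image_eqI le0)
  then show ?thesis unfolding argmin_step_def by (rule LeastI)
qed

primrec optpol :: "(nat \<Rightarrow> nat \<Rightarrow> 'a \<Rightarrow> real) \<Rightarrow> nat \<Rightarrow> 'a \<Rightarrow> nat" where
  "optpol q 0 \<omega> = 0"
| "optpol q (Suc k) \<omega> = argmin_step (q (Suc k)) (optpol q k \<omega>) \<omega>"

context qsys
begin

abbreviation "qq \<equiv> qobj M A B Q R \<theta> N w"

lemma optpol_meas: "k \<le> N \<Longrightarrow> optpol qq k \<in> measurable (Fq M w k) (count_space UNIV)"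
proof (induction k)
  case 0
  then show ?case by simp
next
  case (Suc k)
  have prev: "optpol qq k \<in> measurable (Fq M w (Suc k)) (count_space UNIV)"
    by (rule Fq_le[OF _ _ Suc.IH]) (use Suc.prems in \<open>auto intro!: Fq_w\<close>)
  have [measurable]: "qq (Suc k) e \<in> borel_measurable (Fq M w (Suc k))" for e
    by (rule qobj_measF) (use Suc.prems in auto)
  have st: "(\<lambda>\<omega>. argmin_step (qq (Suc k)) a \<omega>) \<in> measurable (Fq M w (Suc k)) (count_space UNIV)" for a
    unfolding argmin_step_def by measurable
  have "(\<lambda>\<omega>. argmin_step (qq (Suc k)) (optpol qq k \<omega>) \<omega>) \<in> measurable (Fq M w (Suc k)) (count_space UNIV)"
    by (rule measurable_compose_countable[OF st prev])
  then show ?case by simp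
qed

lemma optpol_ok:
  "admissible M w N (optpol qq) \<and> argmin_policy M A B Q R \<theta> N w (optpol qq)"
proof -
  have step: "optpol qq k \<omega> \<le> optpol qq (k - 1) \<omega> + 1 \<and>
        (\<forall>e\<le>optpol qq (k - 1) \<omega> + 1. qq k (optpol qq k \<omega>) \<omega> \<le> qq k e \<omega>)" if "k \<ge> 1" for k \<omega>
  proof -
    from that obtain j where j: "k = Suc j" by (cases k) auto
    show ?thesis unfolding j using argmin_step_prop[of "qq (Suc j)" "optpol qq j \<omega>" \<omega>] by simp
  qed
  show ?thesis
    unfolding admissible_def argmin_policy_def using step optpol_meas by auto
qed

end


lemma (in prob_space) case_decomp:
  fixes eta :: "'a \<Rightarrow> nat" and f :: "nat \<Rightarrow> 'a \<Rightarrow> real"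
  assumes b: "\<And>x. x \<in> space M \<Longrightarrow> eta x \<le> b" and x: "x \<in> space M"
  shows "f (eta x) x = (\<Sum>e\<in>{..b}. indicator {y\<in>space M. eta y = e} x * f e x)"
proof -
  have "(\<Sum>e\<in>{..b}. indicator {y\<in>space M. eta y = e} x * f e x) = (\<Sum>e\<in>{eta x}. indicator {y\<in>space M. eta y = e} x * f e x)"
    by (rule sum.mono_neutral_right) (use b x in \<open>auto simp: indicator_def split: if_splits\<close>)
  then show ?thesis using x by simp
qed

lemma (in prob_space) case_int:
  fixes eta :: "'a \<Rightarrow> nat" and f :: "nat \<Rightarrow> 'a \<Rightarrow> real"
  assumes eta: "eta \<in> measurable M (count_space UNIV)"
    and b: "\<And>x. x \<in> space M \<Longrightarrow> eta x \<le> b" and f: "\<And>n. n \<le> b \<Longrightarrow> integrable M (f n)"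
  shows "integrable M (\<lambda>x. f (eta x) x)"
    "(\<integral>x. f (eta x) x \<partial>M) = (\<Sum>e\<in>{..b}. \<integral>x. indicator {y\<in>space M. eta y = e} x * f e x \<partial>M)"
proof -
  have sets: "{y\<in>space M. eta y = e} \<in> sets M" for e using eta by measurable
  have ii: "integrable M (\<lambda>x. indicator {y\<in>space M. eta y = e} x * f e x)" if "e \<le> b" for e
    using integrable_real_mult_indicator[OF sets f[OF that]] by (simp add: mult.commute)
  have isum: "integrable M (\<lambda>x. \<Sum>e\<in>{..b}. indicator {y\<in>space M. eta y = e} x * f e x)"
    using ii by (intro Bochner_Integration.integrable_sum) auto
  show "integrable M (\<lambda>x. f (eta x) x)"
    by (rule Bochner_Integration.integrable_cong[THEN iffD1, OF refl _ isum]) (rule case_decomp[OF b, symmetric], assumption)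
  have "(\<integral>x. f (eta x) x \<partial>M) = (\<integral>x. (\<Sum>e\<in>{..b}. indicator {y\<in>space M. eta y = e} x * f e x) \<partial>M)"
    by (rule Bochner_Integration.integral_cong[OF refl]) (rule case_decomp[OF b], assumption)
  also have "\<dots> = (\<Sum>e\<in>{..b}. \<integral>x. indicator {y\<in>space M. eta y = e} x * f e x \<partial>M)"
    by (rule Bochner_Integration.integral_sum) (use ii in auto)
  finally show "(\<integral>x. f (eta x) x \<partial>M) = (\<Sum>e\<in>{..b}. \<integral>x. indicator {y\<in>space M. eta y = e} x * f e x \<partial>M)" .
qed

context qsys
begin

lemma adm_bound: "admissible M w N \<pi> \<Longrightarrow> k \<le> N \<Longrightarrow> \<omega> \<in> space M \<Longrightarrow> \<pi> k \<omega> \<le> k"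
proof (induction k)
  case 0
  then show ?case unfolding admissible_def by auto
next
  case (Suc k)
  then have "\<pi> (Suc k) \<omega> \<le> \<pi> k \<omega> + 1" unfolding admissible_def by (metis atLeastAtMost_iff diff_Suc_1 le_add1 plus_1_eq_Suc)
  then show ?case using Suc by simp
qed

lemma adm_measF: "admissible M w N \<pi> \<Longrightarrow> k \<le> N \<Longrightarrow> \<pi> k \<in> measurable (Fq M w k) (count_space UNIV)"
  unfolding admissible_def by auto

lemma adm_meas: "admissible M w N \<pi> \<Longrightarrow> k \<le> N \<Longrightarrow> \<pi> k \<in> measurable M (count_space UNIV)"
  by (rule Fq_le[OF _ _ adm_measF]) (auto intro: w_meas)

definition stage :: "(nat \<Rightarrow> 'a \<Rightarrow> nat) \<Rightarrow> nat \<Rightarrow> 'a \<Rightarrow> real" where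
  "stage \<pi> k \<omega> = - \<theta> k * real (\<pi> k \<omega>)
     + ek A w k (\<pi> k \<omega>) \<omega> \<bullet> (ricGamma A B Q R N k *v ek A w k (\<pi> k \<omega>) \<omega>)"

lemma stage_int: "admissible M w N \<pi> \<Longrightarrow> k \<le> N \<Longrightarrow> integrable M (stage \<pi> k)"
proof -
  assume adm: "admissible M w N \<pi>" and k: "k \<le> N"
  have g: "goodv M M (\<lambda>\<omega>. ek A w k (\<pi> k \<omega>) \<omega>)"
    by (rule goodv_case[OF subalgebra_refl adm_meas[OF adm k] adm_bound[OF adm k]]) (use ek_goodM k in auto)
  have i1: "integrable M (\<lambda>\<omega>. ek A w k (\<pi> k \<omega>) \<omega> \<bullet> (ricGamma A B Q R N k *v ek A w k (\<pi> k \<omega>) \<omega>))"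
    by (rule goodv_inner[OF subalgebra_refl g goodv_mv[OF subalgebra_refl g]])
  have i2: "integrable M (\<lambda>\<omega>. real (\<pi> k \<omega>))"
    by (rule case_int(1)[OF adm_meas[OF adm k] adm_bound[OF adm k], where f="\<lambda>n \<omega>. real n"]) auto
  show ?thesis unfolding stage_def[abs_def] using i1 i2 by auto
qed


lemma ce_swap:
  assumes adm: "admissible M w N \<pi>" and k: "k \<le> N"
  shows "integrable M (\<lambda>\<omega>. real_cond_exp M (Fq M w k) (Vq M A B Q R \<theta> N w (Suc k) (\<pi> k \<omega>)) \<omega>)"
    "(\<integral>\<omega>. Vq M A B Q R \<theta> N w (Suc k) (\<pi> k \<omega>) \<omega> \<partial>M)
     = (\<integral>\<omega>. real_cond_exp M (Fq M w k) (Vq M A B Q R \<theta> N w (Suc k) (\<pi> k \<omega>)) \<omega> \<partial>M)"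
proof -
  interpret sf: sigma_finite_subalgebra M "Fq M w k" using Fsf k by simp
  let ?V = "\<lambda>n. Vq M A B Q R \<theta> N w (Suc k) n"
  have Vi: "integrable M (?V n)" for n using Vq_int k by simp
  have Ci: "integrable M (real_cond_exp M (Fq M w k) (?V n))" for n using sf.real_cond_exp_int(1)[OF Vi] .
  note em = adm_meas[OF adm k] and eb = adm_bound[OF adm k]
  show "integrable M (\<lambda>\<omega>. real_cond_exp M (Fq M w k) (?V (\<pi> k \<omega>)) \<omega>)"
    by (rule case_int(1)[OF em eb, where f="\<lambda>n. real_cond_exp M (Fq M w k) (?V n)"]) (use Ci in auto)
  have setF: "{y\<in>space M. \<pi> k y = e} \<in> sets (Fq M w k)" for e
  proof -
    have "{y\<in>space (Fq M w k). \<pi> k y = e} \<in> sets (Fq M w k)" using adm_measF[OF adm k] by measurable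
    then show ?thesis by simp
  qed
  have eq: "(\<integral>x. indicator {y\<in>space M. \<pi> k y = e} x * ?V e x \<partial>M)
      = (\<integral>x. indicator {y\<in>space M. \<pi> k y = e} x * real_cond_exp M (Fq M w k) (?V e) x \<partial>M)" for e
  proof -
    have "integrable M (\<lambda>x. indicator {y\<in>space M. \<pi> k y = e} x * ?V e x)"
      using integrable_real_mult_indicator[OF sf.subalg[unfolded subalgebra_def, THEN conjunct2, THEN subsetD, OF setF] Vi]
      by (simp add: mult.commute)
    moreover have "(indicator {y\<in>space M. \<pi> k y = e} :: 'a \<Rightarrow> real) \<in> borel_measurable (Fq M w k)"
      using setF by simp
    moreover have "?V e \<in> borel_measurable M" using Vi by (rule borel_measurable_integrable)
    ultimately show ?thesis by (rule sf.real_cond_exp_intg(2)[symmetric])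
  qed
  show "(\<integral>\<omega>. ?V (\<pi> k \<omega>) \<omega> \<partial>M) = (\<integral>\<omega>. real_cond_exp M (Fq M w k) (?V (\<pi> k \<omega>)) \<omega> \<partial>M)"
  proof -
    have L: "(\<integral>\<omega>. ?V (\<pi> k \<omega>) \<omega> \<partial>M) = (\<Sum>e\<in>{..k}. \<integral>x. indicator {y\<in>space M. \<pi> k y = e} x * ?V e x \<partial>M)"
      by (rule case_int(2)[OF em eb]) (use Vi in auto)
    have R: "(\<integral>\<omega>. real_cond_exp M (Fq M w k) (?V (\<pi> k \<omega>)) \<omega> \<partial>M)
       = (\<Sum>e\<in>{..k}. \<integral>x. indicator {y\<in>space M. \<pi> k y = e} x * real_cond_exp M (Fq M w k) (?V e) x \<partial>M)"
      by (rule case_int(2)[OF em eb, where f="\<lambda>n. real_cond_exp M (Fq M w k) (?V n)"]) (use Ci in auto)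
    show ?thesis unfolding L R using eq by (intro sum.cong) auto
  qed
qed


lemma dp_step:
  assumes adm: "admissible M w N \<pi>"
  shows "Suc N - k = d \<Longrightarrow> 1 \<le> k \<Longrightarrow> k \<le> Suc N \<Longrightarrow>
    integrable M (\<lambda>\<omega>. \<Sum>j\<in>{k..N}. stage \<pi> j \<omega>)
    \<and> (\<integral>\<omega>. Vq M A B Q R \<theta> N w k (\<pi> (k - 1) \<omega>) \<omega> \<partial>M) \<le> (\<integral>\<omega>. (\<Sum>j\<in>{k..N}. stage \<pi> j \<omega>) \<partial>M)
    \<and> (argmin_policy M A B Q R \<theta> N w \<pi> \<longrightarrow>
        (\<integral>\<omega>. Vq M A B Q R \<theta> N w k (\<pi> (k - 1) \<omega>) \<omega> \<partial>M) = (\<integral>\<omega>. (\<Sum>j\<in>{k..N}. stage \<pi> j \<omega>) \<partial>M))"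
proof (induction d arbitrary: k)
  case 0
  then have k: "k = Suc N" by simp
  show ?case unfolding k by (simp add: Vq_last)
next
  case (Suc d)
  then have kN: "k \<le> N" and k1: "1 \<le> k" by auto
  have IH: "integrable M (\<lambda>\<omega>. \<Sum>j\<in>{Suc k..N}. stage \<pi> j \<omega>)
    \<and> (\<integral>\<omega>. Vq M A B Q R \<theta> N w (Suc k) (\<pi> k \<omega>) \<omega> \<partial>M) \<le> (\<integral>\<omega>. (\<Sum>j\<in>{Suc k..N}. stage \<pi> j \<omega>) \<partial>M)
    \<and> (argmin_policy M A B Q R \<theta> N w \<pi> \<longrightarrow>
        (\<integral>\<omega>. Vq M A B Q R \<theta> N w (Suc k) (\<pi> k \<omega>) \<omega> \<partial>M) = (\<integral>\<omega>. (\<Sum>j\<in>{Suc k..N}. stage \<pi> j \<omega>) \<partial>M))"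
    using Suc.IH[of "Suc k"] Suc.prems by simp
  let ?S = "\<lambda>\<omega>. \<Sum>j\<in>{Suc k..N}. stage \<pi> j \<omega>"
  let ?C = "\<lambda>\<omega>. real_cond_exp M (Fq M w k) (Vq M A B Q R \<theta> N w (Suc k) (\<pi> k \<omega>)) \<omega>"
  let ?P = "\<lambda>\<omega>. Vq M A B Q R \<theta> N w k (\<pi> (k - 1) \<omega>) \<omega>"
  have split: "(\<Sum>j\<in>{k..N}. stage \<pi> j \<omega>) = stage \<pi> k \<omega> + ?S \<omega>" for \<omega>
    using kN by (simp add: sum.atLeast_Suc_atMost)
  have si: "integrable M (stage \<pi> k)" using stage_int[OF adm kN] .
  have Si: "integrable M ?S" using IH by blast
  have Ci: "integrable M ?C" using ce_swap(1)[OF adm kN] .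
  have int1: "integrable M (\<lambda>\<omega>. \<Sum>j\<in>{k..N}. stage \<pi> j \<omega>)" unfolding split using si Si by auto
  have qeq: "qq k (\<pi> k \<omega>) \<omega> = stage \<pi> k \<omega> + ?C \<omega>" for \<omega>
    unfolding qobj_def stage_def Vq_def by simp
  have qi: "integrable M (\<lambda>\<omega>. qq k (\<pi> k \<omega>) \<omega>)" unfolding qeq using si Ci by auto
  have Pi: "integrable M ?P"
    by (rule case_int(1)[OF adm_meas[OF adm] adm_bound[OF adm]]) (use kN Vq_int in auto)
  have int_q: "(\<integral>\<omega>. qq k (\<pi> k \<omega>) \<omega> \<partial>M) = (\<integral>\<omega>. stage \<pi> k \<omega> \<partial>M) + (\<integral>\<omega>. ?C \<omega> \<partial>M)"
    unfolding qeq using si Ci by simp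
  have int_s: "(\<integral>\<omega>. (\<Sum>j\<in>{k..N}. stage \<pi> j \<omega>) \<partial>M) = (\<integral>\<omega>. stage \<pi> k \<omega> \<partial>M) + (\<integral>\<omega>. ?S \<omega> \<partial>M)"
    unfolding split using si Si by simp
  have swap: "(\<integral>\<omega>. Vq M A B Q R \<theta> N w (Suc k) (\<pi> k \<omega>) \<omega> \<partial>M) = (\<integral>\<omega>. ?C \<omega> \<partial>M)"
    using ce_swap(2)[OF adm kN] .
  have step_le: "\<pi> k \<omega> \<le> \<pi> (k - 1) \<omega> + 1" if "\<omega> \<in> space M" for \<omega>
    using adm that kN k1 unfolding admissible_def by auto
  have ple: "?P \<omega> \<le> qq k (\<pi> k \<omega>) \<omega>" if "\<omega> \<in> space M" for \<omega>
    unfolding Vq_eq[OF kN] using step_le[OF that] by (intro Min_le) auto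
  have "(\<integral>\<omega>. ?P \<omega> \<partial>M) \<le> (\<integral>\<omega>. qq k (\<pi> k \<omega>) \<omega> \<partial>M)"
    by (rule integral_mono[OF Pi qi ple])
  also have "\<dots> \<le> (\<integral>\<omega>. (\<Sum>j\<in>{k..N}. stage \<pi> j \<omega>) \<partial>M)"
    unfolding int_q int_s using IH swap by simp
  finally have le: "(\<integral>\<omega>. ?P \<omega> \<partial>M) \<le> (\<integral>\<omega>. (\<Sum>j\<in>{k..N}. stage \<pi> j \<omega>) \<partial>M)" .
  have eq: "(\<integral>\<omega>. ?P \<omega> \<partial>M) = (\<integral>\<omega>. (\<Sum>j\<in>{k..N}. stage \<pi> j \<omega>) \<partial>M)"
    if am: "argmin_policy M A B Q R \<theta> N w \<pi>"
  proof -
    have peq: "?P \<omega> = qq k (\<pi> k \<omega>) \<omega>" if "\<omega> \<in> space M" for \<omega>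
    proof -
      have opt: "\<forall>e\<le>\<pi> (k - 1) \<omega> + 1. qq k (\<pi> k \<omega>) \<omega> \<le> qq k e \<omega>"
        using am that kN k1 unfolding argmin_policy_def by auto
      show ?thesis
        unfolding Vq_eq[OF kN] using step_le[OF that] opt by (intro Min_eqI) auto
    qed
    have "(\<integral>\<omega>. ?P \<omega> \<partial>M) = (\<integral>\<omega>. qq k (\<pi> k \<omega>) \<omega> \<partial>M)"
      by (rule Bochner_Integration.integral_cong[OF refl peq])
    also have "\<dots> = (\<integral>\<omega>. (\<Sum>j\<in>{k..N}. stage \<pi> j \<omega>) \<partial>M)"
      unfolding int_q int_s using IH swap am by simp
    finally show ?thesis .
  qed
  show ?case using int1 le eq by blast
qed

end


section \<open>Independence and the cross terms\<close>

lemma gaussian_mean0: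
  assumes P: "prob_space M" and G: "gaussian_vec M X 0 C" and C: "\<forall>a. 0 \<le> a \<bullet> (C *v a)"
  shows "(\<integral>\<omega>. X \<omega> $ i \<partial>M) = 0"
proof -
  interpret prob_space M by (rule P)
  define a :: "real^'b" where "a = axis i 1"
  have ax: "a \<bullet> v = v $ i" for v unfolding a_def by (simp add: inner_axis')
  have Xm: "X \<in> borel_measurable M" using G gaussian_vec_def by blast
  have mi: "(\<lambda>x. X x $ i) \<in> borel_measurable M" by (rule vec_nth_measurable[OF Xm])
  have g: "if a \<bullet> (C *v a) = 0 then (AE \<omega> in M. a \<bullet> X \<omega> = a \<bullet> 0)
          else distributed M lborel (\<lambda>\<omega>. a \<bullet> X \<omega>)
                 (\<lambda>x. ennreal (normal_density (a \<bullet> 0) (sqrt (a \<bullet> (C *v a))) x))"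
    using G unfolding gaussian_vec_def by blast
  show ?thesis
  proof (cases "a \<bullet> (C *v a) = 0")
    case True
    then have "AE \<omega> in M. X \<omega> $ i = 0" using g ax by simp
    then show ?thesis using integral_cong_AE[of "\<lambda>\<omega>. X \<omega> $ i" M "\<lambda>_. 0"] mi by simp
  next
    case False
    have d: "distributed M lborel (\<lambda>\<omega>. X \<omega> $ i) (\<lambda>x. ennreal (normal_density 0 (sqrt (a \<bullet> (C *v a))) x))"
      using g False ax by simp
    have "(\<integral>x. normal_density 0 (sqrt (a \<bullet> (C *v a))) x * x \<partial>lborel) = (\<integral>\<omega>. X \<omega> $ i \<partial>M)"
      by (rule distributed_integral[OF d]) auto
    moreover have "(\<integral>x. normal_density 0 (sqrt (a \<bullet> (C *v a))) x * x \<partial>lborel) = 0"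
    proof -
      have "0 < sqrt (a \<bullet> (C *v a))" using False C by (metis order_le_less real_sqrt_gt_0_iff)
      then show ?thesis using integral_normal_moment_nz_1[of "sqrt (a \<bullet> (C *v a))" 0] by simp
    qed
    ultimately show ?thesis by simp
  qed
qed


definition genE :: "'a measure \<Rightarrow> ('a \<Rightarrow> real^'n) \<Rightarrow> (nat \<Rightarrow> 'a \<Rightarrow> real^'n) \<Rightarrow> nat option \<Rightarrow> 'a set set" where
  "genE M x0 w i = {case_option x0 w i -` A \<inter> space M | A. A \<in> sets borel}"

definition Hk :: "'a measure \<Rightarrow> ('a \<Rightarrow> real^'n) \<Rightarrow> (nat \<Rightarrow> 'a \<Rightarrow> real^'n) \<Rightarrow> nat \<Rightarrow> 'a measure" where
  "Hk M x0 w k = sigma (space M) (\<Union>i\<in>insert None (Some ` {..<k}). genE M x0 w i)"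

lemma Hk_sets: "sets (Hk M x0 w k) = sigma_sets (space M) (\<Union>i\<in>insert None (Some ` {..<k}). genE M x0 w i)"
  unfolding Hk_def by (rule sets_measure_of) (auto simp: genE_def)

lemma Hk_space[simp]: "space (Hk M x0 w k) = space M"
  unfolding Hk_def by (rule space_measure_of) (auto simp: genE_def)

lemma Hk_meas:
  assumes "i \<in> insert None (Some ` {..<k})"
  shows "case_option x0 w i \<in> borel_measurable (Hk M x0 w k)"
proof (rule measurableI)
  fix A :: "(real^'b) set" assume "A \<in> sets borel"
  then have "case_option x0 w i -` A \<inter> space M \<in> genE M x0 w i" unfolding genE_def by blast
  then show "case_option x0 w i -` A \<inter> space (Hk M x0 w k) \<in> sets (Hk M x0 w k)"
    unfolding Hk_sets using assms by (auto intro: sigma_sets.Basic)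
qed simp

lemma Hk_x0: "x0 \<in> borel_measurable (Hk M x0 w k)"
  using Hk_meas[of None k x0 w M] by simp

lemma Hk_w: "t < k \<Longrightarrow> w t \<in> borel_measurable (Hk M x0 w k)"
  using Hk_meas[of "Some t" k x0 w M] by simp

lemma (in prob_space) Hk_sub:
  assumes x0: "x0 \<in> borel_measurable M" and w: "\<And>t. t < k \<Longrightarrow> w t \<in> borel_measurable M"
  shows "subalgebra M (Hk M x0 w k)"
proof -
  have "genE M x0 w i \<subseteq> sets M" if "i \<in> insert None (Some ` {..<k})" for i
    using that x0 w unfolding genE_def by (auto simp: measurable_sets)
  then have "sigma_sets (space M) (\<Union>i\<in>insert None (Some ` {..<k}). genE M x0 w i) \<subseteq> sets M"
    by (intro sets.sigma_sets_subset) auto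
  then show ?thesis unfolding subalgebra_def Hk_sets by simp
qed

lemma (in prob_space) indep_cross:
  fixes x0 :: "'a \<Rightarrow> real^'n" and w :: "nat \<Rightarrow> 'a \<Rightarrow> real^'n" and f :: "'a \<Rightarrow> real"
  assumes Ind: "indep_vars (\<lambda>_. borel) (case_option x0 w) (insert None (Some ` {0..N}))"
    and kN: "k \<le> N" and f: "f \<in> borel_measurable (Hk M x0 w k)" and fi: "integrable M f"
    and wi: "integrable M (\<lambda>\<omega>. w k \<omega> $ i)"
  shows "(\<integral>\<omega>. w k \<omega> $ i * f \<omega> \<partial>M) = (\<integral>\<omega>. w k \<omega> $ i \<partial>M) * (\<integral>\<omega>. f \<omega> \<partial>M)"
proof -
  let ?IA = "insert None (Some ` {0..N})"
  let ?E = "genE M x0 w"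
  let ?I = "case_bool {Some k} (insert None (Some ` {..<k}))"
  have rv: "\<And>j. j \<in> ?IA \<Longrightarrow> random_variable borel (case_option x0 w j)"
    and ind0: "indep_sets ?E ?IA"
    using Ind unfolding indep_vars_def2 genE_def by auto
  have U: "(\<Union>j. ?I j) = insert (Some k) (insert None (Some ` {..<k}))"
    by (auto simp: UNIV_bool)
  have ind1: "indep_sets ?E (\<Union>j\<in>UNIV. ?I j)"
    by (rule indep_sets_mono_index[OF _ ind0]) (use kN U in auto)
  have Ist: "Int_stable (?E i)" for i
  proof (rule Int_stableI)
    fix a b assume "a \<in> ?E i" "b \<in> ?E i"
    then obtain A B where "A \<in> sets borel" "B \<in> sets borel"
      "a = case_option x0 w i -` A \<inter> space M" "b = case_option x0 w i -` B \<inter> space M"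
      unfolding genE_def by auto
    then show "a \<inter> b \<in> ?E i" unfolding genE_def by (intro CollectI exI[of _ "A \<inter> B"]) auto
  qed
  have disj: "disjoint_family_on ?I UNIV"
    unfolding disjoint_family_on_def by (auto simp: UNIV_bool)
  have ind2: "indep_sets (\<lambda>j. sigma_sets (space M) (\<Union>i\<in>?I j. ?E i)) UNIV"
    by (rule indep_sets_collect_sigma[OF ind1 Ist disj])
  have wk: "w k \<in> borel_measurable M" using rv[of "Some k"] kN by simp
  have X1m: "(\<lambda>\<omega>. w k \<omega> $ i) \<in> borel_measurable M" by (rule vec_nth_measurable[OF wk])
  have sub: "subalgebra M (Hk M x0 w k)"
  proof (rule Hk_sub)
    show "x0 \<in> borel_measurable M" using rv[of None] by simp
    fix t assume "t < k" then show "w t \<in> borel_measurable M" using rv[of "Some t"] kN by simp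
  qed
  have fM: "f \<in> borel_measurable M" using measurable_from_subalg[OF sub f] .
  have s1: "sigma_sets (space M) {(\<lambda>\<omega>. w k \<omega> $ i) -` A \<inter> space M | A. A \<in> sets borel}
      \<subseteq> sigma_sets (space M) (\<Union>j\<in>?I True. ?E j)"
  proof (rule sigma_sets_mono, safe)
    fix A :: "real set" assume A: "A \<in> sets borel"
    have mm: "(\<lambda>v::real^'n. v $ i) \<in> borel_measurable borel"
      using vec_nth_measurable[of "\<lambda>v. v" borel i] by simp
    have "(\<lambda>v::real^'n. v $ i) -` A \<inter> space borel \<in> sets borel" by (rule measurable_sets[OF mm A])
    then have "(\<lambda>v::real^'n. v $ i) -` A \<in> sets borel" by simp
    then have "(\<lambda>\<omega>. w k \<omega> $ i) -` A \<inter> space M \<in> ?E (Some k)"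
      unfolding genE_def by (intro CollectI exI[of _ "(\<lambda>v::real^'n. v $ i) -` A"]) auto
    then show "(\<lambda>\<omega>. w k \<omega> $ i) -` A \<inter> space M \<in> sigma_sets (space M) (\<Union>j\<in>?I True. ?E j)"
      by (auto intro: sigma_sets.Basic)
  qed
  have s2: "sigma_sets (space M) {f -` A \<inter> space M | A. A \<in> sets borel}
      \<subseteq> sigma_sets (space M) (\<Union>j\<in>?I False. ?E j)"
  proof (rule sigma_sets_mono, safe)
    fix A :: "real set" assume A: "A \<in> sets borel"
    have "f -` A \<inter> space (Hk M x0 w k) \<in> sets (Hk M x0 w k)" using f A by (rule measurable_sets)
    then show "f -` A \<inter> space M \<in> sigma_sets (space M) (\<Union>j\<in>?I False. ?E j)"
      unfolding Hk_sets by simp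
  qed
  have "indep_var borel (\<lambda>\<omega>. w k \<omega> $ i) borel f"
    unfolding indep_var_eq indep_set_def
  proof (intro conjI)
    show "random_variable borel (\<lambda>\<omega>. w k \<omega> $ i)" using X1m by simp
    show "random_variable borel f" using fM by simp
    show "indep_sets (case_bool (sigma_sets (space M) {(\<lambda>\<omega>. w k \<omega> $ i) -` A \<inter> space M | A. A \<in> sets borel})
        (sigma_sets (space M) {f -` A \<inter> space M | A. A \<in> sets borel})) UNIV"
      by (rule indep_sets_mono_sets[OF ind2]) (use s1 s2 in \<open>auto split: bool.split\<close>)
  qed
  then show ?thesis using indep_var_lebesgue_integral wi fi by blast
qed


lemma hist_w_cong: "(\<And>t. t < k \<Longrightarrow> w t = w' t) \<Longrightarrow> hist A B K eta x0 w k = hist A B K eta x0 w' k"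
  by (induction k) (simp_all add: Let_def)

lemma cl_u_w_cong: "(\<And>t. t < k \<Longrightarrow> w t = w' t) \<Longrightarrow> cl_u A B K eta x0 w k = cl_u A B K eta x0 w' k"
  unfolding cl_u_def by (simp add: Let_def hist_w_cong[of k w w'])

lemma cl_x_w_cong: "(\<And>t. t < k \<Longrightarrow> w t = w' t) \<Longrightarrow> cl_x A B K eta x0 w k = cl_x A B K eta x0 w' k"
  unfolding cl_x_def by (simp add: hist_w_cong[of k w w'])

lemma (in prob_space) goods_int: "subalgebra M N \<Longrightarrow> goods M N f \<Longrightarrow> integrable M f"
  using goods_prod[of N f "\<lambda>_. 1"] goods_const[of N 1] by simp

context qsys
begin

lemma cross_zero:
  fixes S :: "real^'n^'n" and \<pi> :: "nat \<Rightarrow> 'a \<Rightarrow> nat"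
  assumes Ind: "indep_vars (\<lambda>_. borel) (case_option x0 w) (insert None (Some ` {0..N}))"
    and mean0: "\<And>k i. k \<le> N \<Longrightarrow> (\<integral>\<omega>. w k \<omega> $ i \<partial>M) = 0"
    and adm: "admissible M w N \<pi>" and kN: "k \<le> N"
  defines "Y \<equiv> \<lambda>\<omega>. S *v (A *v cl_x A B (ricK A B Q R N) (\<lambda>t. \<pi> t \<omega>) (x0 \<omega>) (\<lambda>t. w t \<omega>) k
                 + B *v cl_u A B (ricK A B Q R N) (\<lambda>t. \<pi> t \<omega>) (x0 \<omega>) (\<lambda>t. w t \<omega>) k)"
  shows "integrable M (\<lambda>\<omega>. w k \<omega> \<bullet> Y \<omega>)" "(\<integral>\<omega>. w k \<omega> \<bullet> Y \<omega> \<partial>M) = 0"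
proof -
  let ?H = "Hk M x0 w k"
  let ?K = "ricK A B Q R N"
  define w' where "w' t = (if t < k then w t else (\<lambda>_. 0))" for t
  have sub: "subalgebra M ?H"
    by (rule Hk_sub) (use kN x0good goodv_measurable w_meas in auto)
  have x0m: "x0 \<in> borel_measurable ?H" by (rule Hk_x0)
  have x0H: "goodv M ?H x0"
    using x0good vec_nth_measurable[OF x0m] unfolding goodv_def goods_def by blast
  have wH: "goodv M ?H (w t)" if "t < k" for t
  proof -
    have wm: "w t \<in> borel_measurable ?H" by (rule Hk_w) (use that in simp)
    show ?thesis using wgood[of t] that kN vec_nth_measurable[OF wm] unfolding goodv_def goods_def by auto
  qed
  have w'H: "goodv M ?H (w' t)" for t
    unfolding w'_def using wH goodv_const[OF sub, of 0] by auto
  have piH: "\<pi> j \<in> measurable ?H (count_space UNIV)" if "j \<le> k" for j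
    by (rule Fq_le[OF _ _ adm_measF[OF adm]]) (use that kN in \<open>auto intro!: Hk_w\<close>)
  have pib: "\<pi> j \<omega> \<le> j" if "j \<le> k" "\<omega> \<in> space M" for j \<omega>
    using adm_bound[OF adm] that kN by auto
  have "goodv M ?H (\<lambda>\<omega>. fst (hist A B ?K (\<lambda>t. \<pi> t \<omega>) (x0 \<omega>) (\<lambda>t. w t \<omega>) k) k)
     \<and> goodv M ?H (\<lambda>\<omega>. snd (hist A B ?K (\<lambda>t. \<pi> t \<omega>) (x0 \<omega>) (\<lambda>t. w t \<omega>) k) k)"
    by (rule hist_good[OF sub x0H]) (use wH piH pib in auto)
  then have gX: "goodv M ?H (\<lambda>\<omega>. fst (hist A B ?K (\<lambda>t. \<pi> t \<omega>) (x0 \<omega>) (\<lambda>t. w t \<omega>) k) k)" by blast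
  have "goodv M ?H (\<lambda>\<omega>. fst (hist A B ?K (\<lambda>t. \<pi> t \<omega>) (x0 \<omega>) (\<lambda>t. w' t \<omega>) (Suc k)) k)
     \<and> goodv M ?H (\<lambda>\<omega>. snd (hist A B ?K (\<lambda>t. \<pi> t \<omega>) (x0 \<omega>) (\<lambda>t. w' t \<omega>) (Suc k)) k)"
    by (rule hist_good[OF sub x0H]) (use w'H piH pib in auto)
  then have gU: "goodv M ?H (\<lambda>\<omega>. snd (hist A B ?K (\<lambda>t. \<pi> t \<omega>) (x0 \<omega>) (\<lambda>t. w' t \<omega>) (Suc k)) k)" by blast
  have eX: "cl_x A B ?K (\<lambda>t. \<pi> t \<omega>) (x0 \<omega>) (\<lambda>t. w t \<omega>) k = fst (hist A B ?K (\<lambda>t. \<pi> t \<omega>) (x0 \<omega>) (\<lambda>t. w t \<omega>) k) k" for \<omega>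
    unfolding cl_x_def ..
  have eU: "cl_u A B ?K (\<lambda>t. \<pi> t \<omega>) (x0 \<omega>) (\<lambda>t. w t \<omega>) k = snd (hist A B ?K (\<lambda>t. \<pi> t \<omega>) (x0 \<omega>) (\<lambda>t. w' t \<omega>) (Suc k)) k" for \<omega>
    unfolding cl_u_def[symmetric] by (rule cl_u_w_cong) (simp add: w'_def)
  have gY: "goodv M ?H Y"
    unfolding Y_def eX eU by (intro goodv_mv[OF sub] goodv_add[OF sub] gX gU)
  have wkM: "goodv M M (w k)" using wgood kN by simp
  have trm: "integrable M (\<lambda>\<omega>. w k \<omega> $ i * Y \<omega> $ i) \<and> (\<integral>\<omega>. w k \<omega> $ i * Y \<omega> $ i \<partial>M) = 0" for i
  proof -
    have Yi: "goods M ?H (\<lambda>\<omega>. Y \<omega> $ i)" using gY unfolding goodv_def by blast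
    have Yii: "integrable M (\<lambda>\<omega>. Y \<omega> $ i)" by (rule goods_int[OF sub Yi])
    have wii: "integrable M (\<lambda>\<omega>. w k \<omega> $ i)"
      using goods_int[OF subalgebra_refl] wkM unfolding goodv_def by blast
    have "goods M M (\<lambda>\<omega>. Y \<omega> $ i)" using Yi goods_M[OF sub Yi] unfolding goods_def by blast
    then have int: "integrable M (\<lambda>\<omega>. w k \<omega> $ i * Y \<omega> $ i)"
      using goods_prod[OF subalgebra_refl] wkM unfolding goodv_def by blast
    have "(\<integral>\<omega>. w k \<omega> $ i * Y \<omega> $ i \<partial>M) = (\<integral>\<omega>. w k \<omega> $ i \<partial>M) * (\<integral>\<omega>. Y \<omega> $ i \<partial>M)"
      by (rule indep_cross[OF Ind kN _ Yii wii]) (use Yi goods_def in blast)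
    then show ?thesis using int mean0[OF kN] by simp
  qed
  have ip: "w k \<omega> \<bullet> Y \<omega> = (\<Sum>i\<in>UNIV. w k \<omega> $ i * Y \<omega> $ i)" for \<omega>
    unfolding inner_vec_def by simp
  show "integrable M (\<lambda>\<omega>. w k \<omega> \<bullet> Y \<omega>)" unfolding ip using trm by auto
  show "(\<integral>\<omega>. w k \<omega> \<bullet> Y \<omega> \<partial>M) = 0" unfolding ip using trm by simp
qed


lemma chi_decomp:
  assumes Ind: "indep_vars (\<lambda>_. borel) (case_option x0 w) (insert None (Some ` {0..N}))"
    and mean0: "\<And>k i. k \<le> N \<Longrightarrow> (\<integral>\<omega>. w k \<omega> $ i \<partial>M) = 0"
    and adm: "admissible M w N \<pi>"
  shows "chi M A B Q R \<theta> N x0 w \<pi> =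
    (\<integral>\<omega>. x0 \<omega> \<bullet> (ricS A B Q R N 0 *v x0 \<omega>) + (\<Sum>k\<in>{0..N}. w k \<omega> \<bullet> (ricS A B Q R N (Suc k) *v w k \<omega>)) \<partial>M)
    + (\<integral>\<omega>. (\<Sum>j\<in>{1..N}. stage \<pi> j \<omega>) \<partial>M)"
proof -
  let ?K = "ricK A B Q R N"
  define Y where "Y k \<omega> = ricS A B Q R N (Suc k) *v (A *v cl_x A B ?K (\<lambda>t. \<pi> t \<omega>) (x0 \<omega>) (\<lambda>t. w t \<omega>) k
                 + B *v cl_u A B ?K (\<lambda>t. \<pi> t \<omega>) (x0 \<omega>) (\<lambda>t. w t \<omega>) k)" for k \<omega>
  define base where "base \<omega> = x0 \<omega> \<bullet> (ricS A B Q R N 0 *v x0 \<omega>) + (\<Sum>k\<in>{0..N}. w k \<omega> \<bullet> (ricS A B Q R N (Suc k) *v w k \<omega>))" for \<omega>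
  have pw: "cl_cost A B ?K Q R \<theta> N (\<lambda>k. \<pi> k \<omega>) (x0 \<omega>) (\<lambda>k. w k \<omega>)
      = base \<omega> + (\<Sum>j\<in>{1..N}. stage \<pi> j \<omega>) + (\<Sum>k\<in>{0..N}. 2 * (w k \<omega> \<bullet> Y k \<omega>))" if \<omega>: "\<omega> \<in> space M" for \<omega>
  proof -
    have bnd: "\<And>k. k \<le> N \<Longrightarrow> \<pi> k \<omega> \<le> k" using adm_bound[OF adm] \<omega> by blast
    have ev: "evec A (\<lambda>t. w t \<omega>) k e = ek A w k e \<omega>" for k e unfolding evec_def ek_def ..
    have s0: "stage \<pi> 0 \<omega> = 0" using adm \<omega> unfolding admissible_def stage_def ek_def by simp
    have "(\<Sum>j\<in>{0..N}. stage \<pi> j \<omega>) = (\<Sum>j\<in>{1..N}. stage \<pi> j \<omega>)"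
      using s0 by (simp add: sum.atLeast_Suc_atMost)
    moreover have cd: "cl_cost A B ?K Q R \<theta> N (\<lambda>k. \<pi> k \<omega>) (x0 \<omega>) (\<lambda>k. w k \<omega>)
      = x0 \<omega> \<bullet> (ricS A B Q R N 0 *v x0 \<omega>)
      + (\<Sum>k\<in>{0..N}. - \<theta> k * real (\<pi> k \<omega>)
          + evec A (\<lambda>t. w t \<omega>) k (\<pi> k \<omega>) \<bullet> (ricGamma A B Q R N k *v evec A (\<lambda>t. w t \<omega>) k (\<pi> k \<omega>))
          + w k \<omega> \<bullet> (ricS A B Q R N (Suc k) *v w k \<omega>)
          + 2 * (w k \<omega> \<bullet> (ricS A B Q R N (Suc k) *v (A *v cl_x A B ?K (\<lambda>t. \<pi> t \<omega>) (x0 \<omega>) (\<lambda>t. w t \<omega>) k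
             + B *v cl_u A B ?K (\<lambda>t. \<pi> t \<omega>) (x0 \<omega>) (\<lambda>t. w t \<omega>) k))))"
      by (rule cost_decomp) (use Qpsd Rpd bnd in auto)
    moreover have e1: "(\<Sum>k\<in>{0..N}. - \<theta> k * real (\<pi> k \<omega>)
          + evec A (\<lambda>t. w t \<omega>) k (\<pi> k \<omega>) \<bullet> (ricGamma A B Q R N k *v evec A (\<lambda>t. w t \<omega>) k (\<pi> k \<omega>))
          + w k \<omega> \<bullet> (ricS A B Q R N (Suc k) *v w k \<omega>)
          + 2 * (w k \<omega> \<bullet> (ricS A B Q R N (Suc k) *v (A *v cl_x A B ?K (\<lambda>t. \<pi> t \<omega>) (x0 \<omega>) (\<lambda>t. w t \<omega>) k
             + B *v cl_u A B ?K (\<lambda>t. \<pi> t \<omega>) (x0 \<omega>) (\<lambda>t. w t \<omega>) k))))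
       = (\<Sum>k\<in>{0..N}. stage \<pi> k \<omega>) + (\<Sum>k\<in>{0..N}. w k \<omega> \<bullet> (ricS A B Q R N (Suc k) *v w k \<omega>))
         + (\<Sum>k\<in>{0..N}. 2 * (w k \<omega> \<bullet> Y k \<omega>))"
      unfolding stage_def Y_def ev by (simp only: sum.distrib)
    ultimately show ?thesis
      unfolding base_def by simp

  qed
  have bi: "integrable M base"
    unfolding base_def
    by (intro Bochner_Integration.integrable_add Bochner_Integration.integrable_sum
        goodv_inner[OF subalgebra_refl] goodv_mv[OF subalgebra_refl] x0good wgood) auto
  have si: "integrable M (\<lambda>\<omega>. \<Sum>j\<in>{1..N}. stage \<pi> j \<omega>)"
    using stage_int[OF adm] by (intro Bochner_Integration.integrable_sum) auto
  have ci: "integrable M (\<lambda>\<omega>. w k \<omega> \<bullet> Y k \<omega>)" "(\<integral>\<omega>. w k \<omega> \<bullet> Y k \<omega> \<partial>M) = 0" if "k \<le> N" for k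
    using cross_zero[OF Ind mean0 adm that, of "ricS A B Q R N (Suc k)"] unfolding Y_def by auto
  have "chi M A B Q R \<theta> N x0 w \<pi> = (\<integral>\<omega>. base \<omega> + (\<Sum>j\<in>{1..N}. stage \<pi> j \<omega>) + (\<Sum>k\<in>{0..N}. 2 * (w k \<omega> \<bullet> Y k \<omega>)) \<partial>M)"
    unfolding chi_def by (rule Bochner_Integration.integral_cong[OF refl pw])
  also have "\<dots> = (\<integral>\<omega>. base \<omega> \<partial>M) + (\<integral>\<omega>. (\<Sum>j\<in>{1..N}. stage \<pi> j \<omega>) \<partial>M)
      + (\<Sum>k\<in>{0..N}. 2 * (\<integral>\<omega>. w k \<omega> \<bullet> Y k \<omega> \<partial>M))"
  proof -
    have c2: "integrable M (\<lambda>\<omega>. \<Sum>k\<in>{0..N}. 2 * (w k \<omega> \<bullet> Y k \<omega>))"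
      using ci by (intro Bochner_Integration.integrable_sum) auto
    have "(\<integral>\<omega>. base \<omega> + (\<Sum>j\<in>{1..N}. stage \<pi> j \<omega>) + (\<Sum>k\<in>{0..N}. 2 * (w k \<omega> \<bullet> Y k \<omega>)) \<partial>M)
       = (\<integral>\<omega>. base \<omega> + (\<Sum>j\<in>{1..N}. stage \<pi> j \<omega>) \<partial>M) + (\<integral>\<omega>. (\<Sum>k\<in>{0..N}. 2 * (w k \<omega> \<bullet> Y k \<omega>)) \<partial>M)"
      by (rule Bochner_Integration.integral_add) (use bi si c2 in auto)
    also have "(\<integral>\<omega>. base \<omega> + (\<Sum>j\<in>{1..N}. stage \<pi> j \<omega>) \<partial>M) = (\<integral>\<omega>. base \<omega> \<partial>M) + (\<integral>\<omega>. (\<Sum>j\<in>{1..N}. stage \<pi> j \<omega>) \<partial>M)"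
      by (rule Bochner_Integration.integral_add) (use bi si in auto)
    also have "(\<integral>\<omega>. (\<Sum>k\<in>{0..N}. 2 * (w k \<omega> \<bullet> Y k \<omega>)) \<partial>M) = (\<Sum>k\<in>{0..N}. \<integral>\<omega>. 2 * (w k \<omega> \<bullet> Y k \<omega>) \<partial>M)"
      by (rule Bochner_Integration.integral_sum) (use ci in auto)
    also have "\<dots> = (\<Sum>k\<in>{0..N}. 2 * (\<integral>\<omega>. w k \<omega> \<bullet> Y k \<omega> \<partial>M))"
      by (rule sum.cong) (use ci in auto)
    finally show ?thesis by simp
  qed
  also have "\<dots> = (\<integral>\<omega>. base \<omega> \<partial>M) + (\<integral>\<omega>. (\<Sum>j\<in>{1..N}. stage \<pi> j \<omega>) \<partial>M)"
    using ci by simp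
  finally show ?thesis unfolding base_def .
qed

end


lemma pd_psd: "sym_pd W \<Longrightarrow> \<forall>a. 0 \<le> a \<bullet> (W *v a)"
  unfolding sym_pd_def by (metis inner_zero_left order_less_imp_le order_refl)

lemma psd_psd: "sym_psd W \<Longrightarrow> \<forall>a. 0 \<le> a \<bullet> (W *v a)"
  unfolding sym_psd_def by blast

theorem theorem2:
  fixes M :: "'a measure"
    and A :: "real^'n^'n" and B :: "real^'m^'n"
    and m0 :: "real^'n" and M0 :: "real^'n^'n" and W :: "nat \<Rightarrow> real^'n^'n"
    and Q :: "nat \<Rightarrow> real^'n^'n" and R :: "nat \<Rightarrow> real^'m^'m" and \<theta> :: "nat \<Rightarrow> real"
    and N :: nat
    and x0 :: "'a \<Rightarrow> real^'n" and w :: "nat \<Rightarrow> 'a \<Rightarrow> real^'n"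
  assumes "prob_space M"
    and "controllable A B"
    and "sym_psd M0" and "gaussian_vec M x0 m0 M0"
    and "\<And>k. k \<le> N \<Longrightarrow> sym_pd (W k)"
    and "\<And>k. k \<le> N \<Longrightarrow> gaussian_vec M (w k) 0 (W k)"
    and "prob_space.indep_vars M (\<lambda>_. borel) (case_option x0 w) (insert None (Some ` {0..N}))"
    and "\<And>k. k \<le> Suc N \<Longrightarrow> sym_psd (Q k)"
    and "\<And>k. k \<le> N \<Longrightarrow> sym_pd (R k)"
  shows "(\<exists>eta. admissible M w N eta \<and> argmin_policy M A B Q R \<theta> N w eta)
       \<and> (\<forall>eta. admissible M w N eta \<and> argmin_policy M A B Q R \<theta> N w eta \<longrightarrow>
             (\<forall>\<pi>. admissible M w N \<pi> \<longrightarrow>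
                  chi M A B Q R \<theta> N x0 w eta \<le> chi M A B Q R \<theta> N x0 w \<pi>))"
proof -
  note P = assms(1)
  interpret prob_space M by (rule P)
  have wg: "goodv M M (w k)" if "k \<le> N" for k
    using gaussian_goodv[OF P assms(6)[OF that] pd_psd[OF assms(5)[OF that]]] .
  have xg: "goodv M M x0" using gaussian_goodv[OF P assms(4) psd_psd[OF assms(3)]] .
  interpret q: qsys M A B Q R \<theta> N x0 w
    unfolding qsys_def qsys_axioms_def using P wg xg assms(8,9) by blast
  have Ind: "indep_vars (\<lambda>_. borel) (case_option x0 w) (insert None (Some ` {0..N}))" using assms(7) .
  have mean0: "(\<integral>\<omega>. w k \<omega> $ i \<partial>M) = 0" if "k \<le> N" for k i
    using gaussian_mean0[OF P assms(6)[OF that] pd_psd[OF assms(5)[OF that]]] .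
  define base where "base = (\<integral>\<omega>. x0 \<omega> \<bullet> (ricS A B Q R N 0 *v x0 \<omega>) + (\<Sum>k\<in>{0..N}. w k \<omega> \<bullet> (ricS A B Q R N (Suc k) *v w k \<omega>)) \<partial>M)"
  define V1 where "V1 = (\<integral>\<omega>. Vq M A B Q R \<theta> N w 1 0 \<omega> \<partial>M)"
  have dp: "integrable M (\<lambda>\<omega>. \<Sum>j\<in>{1..N}. q.stage \<pi> j \<omega>)
    \<and> V1 \<le> (\<integral>\<omega>. (\<Sum>j\<in>{1..N}. q.stage \<pi> j \<omega>) \<partial>M)
    \<and> (argmin_policy M A B Q R \<theta> N w \<pi> \<longrightarrow> V1 = (\<integral>\<omega>. (\<Sum>j\<in>{1..N}. q.stage \<pi> j \<omega>) \<partial>M))"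
    if adm: "admissible M w N \<pi>" for \<pi>
  proof -
    have "(\<integral>\<omega>. Vq M A B Q R \<theta> N w 1 (\<pi> (1 - 1) \<omega>) \<omega> \<partial>M) = V1"
      unfolding V1_def
      by (rule Bochner_Integration.integral_cong[OF refl]) (use adm in \<open>simp add: admissible_def\<close>)
    then show ?thesis using q.dp_step[OF adm, of 1 N] by simp
  qed
  have chi_eq: "chi M A B Q R \<theta> N x0 w \<pi> = base + (\<integral>\<omega>. (\<Sum>j\<in>{1..N}. q.stage \<pi> j \<omega>) \<partial>M)"
    if adm: "admissible M w N \<pi>" for \<pi>
    unfolding base_def by (rule q.chi_decomp[OF Ind mean0 adm]) simp
  show ?thesis
  proof (intro conjI allI impI)
    show "\<exists>eta. admissible M w N eta \<and> argmin_policy M A B Q R \<theta> N w eta"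
      using q.optpol_ok by blast
  next
    fix eta \<pi>
    assume e: "admissible M w N eta \<and> argmin_policy M A B Q R \<theta> N w eta" and p: "admissible M w N \<pi>"
    have "chi M A B Q R \<theta> N x0 w eta = base + V1"
      using chi_eq[of eta] dp[of eta] e by simp
    also have "\<dots> \<le> chi M A B Q R \<theta> N x0 w \<pi>"
      using chi_eq[OF p] dp[OF p] by simp
    finally show "chi M A B Q R \<theta> N x0 w eta \<le> chi M A B Q R \<theta> N x0 w \<pi>" .
  qed
qed

end
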